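(* Let $\overline{\mathsf{HAL}}^{pa},\overline{\mathsf{HAL}}^{p},\overline{\mathsf{HAL}}^{a},\overline{\mathsf{HAL}}$ be the symmetric functions uniquely determined by $$\overline{\mathsf{HAL}}^{pa}=p_1\cdot\Bigl(\Bigl[\frac{p_1}{1+p_1}\Bigr]\circ\operatorname{Comm}\circ[p_1-\overline{\mathsf{HAL}}^{pa}]\Bigr),\qquad \overline{\mathsf{HAL}}^{p}=p_1\cdot\Bigl([\Sigma\operatorname{Lie}]\circ\operatorname{Comm}\circ[p_1-\overline{\mathsf{HAL}}^{pa}]\Bigr),$$ $$\overline{\mathsf{HAL}}^{a}=[\operatorname{Comm}-p_1]\circ[p_1-\overline{\mathsf{HAL}}^{pa}],\qquad \overline{\mathsf{HAL}}=\overline{\mathsf{HAL}}^{p}+\overline{\mathsf{HAL}}^{a}-\overline{\mathsf{HAL}}^{pa}.$$ Let $M$ be the symmetric function defined by $M+1=p_1+p_1\operatorname{PreLie}+p_1/\operatorname{PreLie}$. Then $\overline{\mathsf{HAL}}=-\Sigma M$.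
   Context: Symmetric functions are formal power series in the power sums $p_1,p_2,\dots$ over $\mathbb{Q}$. $\circ$ denotes plethysm: $p_k\circ f$ replaces each $p_j$ in $f$ by $p_{jk}$ (rational constants fixed), and $g\circ f$ substitutes $p_k\circ f$ for $p_k$ in $g$. The suspension is $\Sigma f=-f(-p_1,-p_2,-p_3,\dots)$. $\operatorname{Comm}=\exp\bigl(\sum_{k\ge1}p_k/k\bigr)-1$; $\operatorname{Lie}=\sum_{k\ge1}\frac{\mu(k)}{k}\bigl(-\ln(1-p_k)\bigr)$ is the Frobenius characteristic of the Lie operad. $\operatorname{PreLie}$ is the Frobenius characteristic of the permutation representations of $\mathfrak{S}_n$ on labelled rooted trees on $\{1,\dots,n\}$, $n\ge1$; equivalently the unique symmetric function without constant term with $\operatorname{PreLie}=p_1(1+\operatorname{Comm}\circ\operatorname{PreLie})$. (Note $p_1/\operatorname{PreLie}=1/(1+\operatorname{Comm}\circ\operatorname{PreLie})$ is a power series.) The symmetric functions $\overline{\mathsf{HAL}}$ etc. are the specialisations at $t=1$ of functions $\mathsf{HAL}$ defined with a $t$-suspension; the definitions above are these specialisations written directly. *)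

theory Defs
  imports Complex_Main "HOL-Library.Multiset" "HOL-Computational_Algebra.Primes"
    "HOL-Computational_Algebra.Squarefree"
begin

text \<open>Symmetric functions over Q as formal power series in the power sums p_1, p_2, ...
  A monomial p_{l_1} ... p_{l_r} (a partition) is encoded as the multiset of natural numbers
  {l_1 - 1, ..., l_r - 1}: the element i of a multiset stands for the power sum p_(Suc i).\<close>

type_synonym sf = "nat multiset \<Rightarrow> rat"

definition sf_wt :: "nat multiset \<Rightarrow> nat" where
  "sf_wt m = sum_mset (image_mset Suc m)"

definition sf_const :: "rat \<Rightarrow> sf" where
  "sf_const c = (\<lambda>m. if m = {#} then c else 0)"

text \<open>the power sum p_k (k \<ge> 1)\<close>
definition sf_p :: "nat \<Rightarrow> sf" where
  "sf_p k = (\<lambda>m. if m = {# k - 1 #} then 1 else 0)"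

definition sf_add :: "sf \<Rightarrow> sf \<Rightarrow> sf" where
  "sf_add f g = (\<lambda>m. f m + g m)"

definition sf_sub :: "sf \<Rightarrow> sf \<Rightarrow> sf" where
  "sf_sub f g = (\<lambda>m. f m - g m)"

definition sf_neg :: "sf \<Rightarrow> sf" where
  "sf_neg f = (\<lambda>m. - f m)"

definition sf_mult :: "sf \<Rightarrow> sf \<Rightarrow> sf" where
  "sf_mult f g = (\<lambda>m. \<Sum>a \<in> {a. a \<subseteq># m}. f a * g (m - a))"

text \<open>p_k \<circ> f: replace each p_j in f by p_(j*k)  (k \<ge> 1)\<close>
definition sf_pleth_p :: "nat \<Rightarrow> sf \<Rightarrow> sf" where
  "sf_pleth_p k f = (\<lambda>m. \<Sum>a \<in> {a. image_mset (\<lambda>i. Suc i * k - 1) a = m}. f a)"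

definition sf_pleth_mono :: "nat multiset \<Rightarrow> sf \<Rightarrow> sf" where
  "sf_pleth_mono lam f =
     foldr sf_mult (map (\<lambda>i. sf_pleth_p (Suc i) f) (sorted_list_of_multiset lam)) (sf_const 1)"

text \<open>plethysm g \<circ> f = sum over monomials p_lambda of g(lambda) * prod_{i in lambda} (p_i \<circ> f);
  meant for f without constant term, in which case only monomials lambda of weight at most
  the weight of m contribute to the coefficient of m.\<close>
definition sf_pleth :: "sf \<Rightarrow> sf \<Rightarrow> sf" where
  "sf_pleth g f = (\<lambda>m. \<Sum>lam \<in> {lam. sf_wt lam \<le> sf_wt m}. g lam * sf_pleth_mono lam f m)"

text \<open>suspension: Sigma f = - f(-p_1, -p_2, ...)\<close>
definition sf_susp :: "sf \<Rightarrow> sf" where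
  "sf_susp f = (\<lambda>m. - ((-1) ^ size m) * f m)"

text \<open>Comm = exp(sum_k p_k / k) - 1; coefficient of p_lambda is 1 / z_lambda\<close>
definition sf_z :: "nat multiset \<Rightarrow> nat" where
  "sf_z m = (\<Prod>i \<in> set_mset m. Suc i ^ count m i * fact (count m i))"

definition Comm :: sf where
  "Comm = (\<lambda>m. if m = {#} then 0 else 1 / of_nat (sf_z m))"

text \<open>the series p_1/(1+p_1) = sum_{n\<ge>1} (-1)^(n-1) p_1^n\<close>
definition sf_p1_over_1_plus_p1 :: sf where
  "sf_p1_over_1_plus_p1 =
     (\<lambda>m. if m \<noteq> {#} \<and> set_mset m = {0} then (-1) ^ (size m - 1) else 0)"

definition moebius :: "nat \<Rightarrow> int" where
  "moebius k = (if k > 0 \<and> squarefree k then (-1) ^ card (prime_factors k) else 0)"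

text \<open>Lie = sum_{k\<ge>1} mu(k)/k * (-ln(1-p_k)) = sum_{k\<ge>1} sum_{n\<ge>1} mu(k)/(k n) p_k^n\<close>
definition Lie :: sf where
  "Lie = (\<lambda>m. if m \<noteq> {#} \<and> (\<exists>j. set_mset m = {j})
              then of_int (moebius (Suc (Min (set_mset m)))) /
                   (of_nat (Suc (Min (set_mset m))) * of_nat (size m))
              else 0)"

end

theory Submission
  imports Defs "HOL-Library.Groups_Big_Fun"
begin


lemma finite_msets_bounded:
  assumes "finite S" shows "finite {a :: 'a multiset. set_mset a \<subseteq> S \<and> size a \<le> n}"
proof -
  have "{a :: 'a multiset. set_mset a \<subseteq> S \<and> size a \<le> n} \<subseteq> mset ` {xs. set xs \<subseteq> S \<and> length xs \<le> n}"
  proof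
    fix a :: "'a multiset" assume "a \<in> {a. set_mset a \<subseteq> S \<and> size a \<le> n}"
    then show "a \<in> mset ` {xs. set xs \<subseteq> S \<and> length xs \<le> n}"
      by (metis (mono_tags, lifting) ex_mset image_eqI mem_Collect_eq set_mset_mset size_mset)
  qed
  moreover have "finite {xs. set xs \<subseteq> S \<and> length xs \<le> n}"
    using finite_lists_length_le[OF assms] by simp
  ultimately show ?thesis by (meson finite_imageI finite_subset)
qed

lemma finite_submsets: "finite {a. a \<subseteq># (m::'a multiset)}"
  by (rule finite_subset[OF _ finite_msets_bounded[of "set_mset m" "size m"]])
     (auto dest: set_mset_mono size_mset_mono)

lemma sf_wt_add[simp]: "sf_wt (a + b) = sf_wt a + sf_wt b"
  by (simp add: sf_wt_def)
lemma sf_wt_empty[simp]: "sf_wt {#} = 0" by (simp add: sf_wt_def)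
lemma sf_wt_add_mset[simp]: "sf_wt (add_mset x a) = Suc x + sf_wt a" by (simp add: sf_wt_def)
lemma sf_wt_eq0[simp]: "sf_wt a = 0 \<longleftrightarrow> a = {#}"
  by (induct a) auto
lemma size_le_wt: "size a \<le> sf_wt a" by (induct a) auto
lemma elem_lt_wt: "x \<in># a \<Longrightarrow> x < sf_wt a"
  by (induct a) auto

lemma finite_wt_le: "finite {lam. sf_wt lam \<le> n}"
  by (rule finite_subset[OF _ finite_msets_bounded[of "{..<n}" n]])
     (auto dest: elem_lt_wt intro: order.trans[OF size_le_wt])

lemma sf_wt_mono: "a \<subseteq># b \<Longrightarrow> sf_wt a \<le> sf_wt b"
  by (metis le_add1 sf_wt_add subset_mset.add_diff_inverse)


definition dec :: "nat multiset \<Rightarrow> (nat multiset \<times> nat multiset) set" where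
  "dec m = {p. fst p + snd p = m}"

lemma dec_eq: "dec m = (\<lambda>a. (a, m - a)) ` {a. a \<subseteq># m}"
  by (auto simp: dec_def image_iff intro!: exI[of _ "fst _"])

lemma finite_dec[simp]: "finite (dec m)"
  by (simp add: dec_eq finite_submsets)

lemma sf_mult_dec: "sf_mult f g m = (\<Sum>p\<in>dec m. f (fst p) * g (snd p))"
  unfolding sf_mult_def dec_eq
  by (subst sum.reindex) (auto simp: inj_on_def)

lemma dec_swap: "(\<Sum>p\<in>dec m. h (fst p) (snd p)) = (\<Sum>p\<in>dec m. h (snd p) (fst p))"
  by (rule sum.reindex_bij_witness[of _ "\<lambda>(a,b). (b,a)" "\<lambda>(a,b). (b,a)"]) (auto simp: dec_def)

lemma dec_assoc1:
  "(\<Sum>p\<in>dec m. (\<Sum>q\<in>dec (fst p). h (fst q) (snd q) (snd p))) =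
   (\<Sum>t\<in>{t. fst t + fst (snd t) + snd (snd t) = m}. h (fst t) (fst (snd t)) (snd (snd t)))"
proof -
  have "(\<Sum>p\<in>dec m. (\<Sum>q\<in>dec (fst p). h (fst q) (snd q) (snd p))) =
        (\<Sum>pq\<in>Sigma (dec m) (\<lambda>p. dec (fst p)). h (fst (snd pq)) (snd (snd pq)) (snd (fst pq)))"
    by (subst sum.Sigma) (auto simp: split_def)
  also have "\<dots> = (\<Sum>t\<in>{t. fst t + fst (snd t) + snd (snd t) = m}. h (fst t) (fst (snd t)) (snd (snd t)))"
    by (rule sum.reindex_bij_witness[of _ "\<lambda>(a,b,c). ((a+b,c),(a,b))" "\<lambda>((c,d),(a,b)). (a,b,d)"])
       (auto simp: dec_def)
  finally show ?thesis .
qed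

lemma dec_assoc2:
  "(\<Sum>p\<in>dec m. (\<Sum>q\<in>dec (snd p). h (fst p) (fst q) (snd q))) =
   (\<Sum>t\<in>{t. fst t + fst (snd t) + snd (snd t) = m}. h (fst t) (fst (snd t)) (snd (snd t)))"
proof -
  have "(\<Sum>p\<in>dec m. (\<Sum>q\<in>dec (snd p). h (fst p) (fst q) (snd q))) =
        (\<Sum>pq\<in>Sigma (dec m) (\<lambda>p. dec (snd p)). h (fst (fst pq)) (fst (snd pq)) (snd (snd pq)))"
    by (subst sum.Sigma) (auto simp: split_def)
  also have "\<dots> = (\<Sum>t\<in>{t. fst t + fst (snd t) + snd (snd t) = m}. h (fst t) (fst (snd t)) (snd (snd t)))"
    by (rule sum.reindex_bij_witness[of _ "\<lambda>(a,b,c). ((a,b+c),(b,c))" "\<lambda>((a,d),(b,c)). (a,b,c)"])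
       (auto simp: dec_def add.assoc)
  finally show ?thesis .
qed

lemma dec_empty_left: "(\<Sum>p\<in>dec m. (if fst p = {#} then c else 0) * g (snd p)) = c * (g m :: rat)"
proof -
  have eq: "\<And>p. p \<in> dec m \<Longrightarrow> (if fst p = {#} then c else 0) * g (snd p) = (if p = ({#},m) then c * g m else 0)"
    by (auto simp: dec_def)
  have "(\<Sum>p\<in>dec m. (if fst p = {#} then c else 0) * g (snd p)) = (\<Sum>p\<in>dec m. (if p = ({#},m) then c * g m else 0))"
    using sum.cong[OF refl eq] .
  also have "\<dots> = c * g m" by (subst sum.delta) (simp_all add: finite_dec, simp add: dec_def)
  finally show ?thesis .
qed

lemma sf_mult_assoc: "sf_mult (sf_mult a b) c = sf_mult a (sf_mult b c)"
proof
  fix m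
  show "sf_mult (sf_mult a b) c m = sf_mult a (sf_mult b c) m"
    unfolding sf_mult_dec sum_distrib_right sum_distrib_left
    using dec_assoc1[where h="\<lambda>x y z. a x * b y * c z"] dec_assoc2[where h="\<lambda>x y z. a x * b y * c z"]
    by (simp add: mult.assoc)
qed

typedef ps = "UNIV :: sf set" by simp
setup_lifting type_definition_ps

lift_definition coeff :: "ps \<Rightarrow> nat multiset \<Rightarrow> rat" is "\<lambda>f. f" .

lemma ps_eqI: "(\<And>m. coeff f m = coeff g m) \<Longrightarrow> f = g"
  by transfer auto

instantiation ps :: comm_ring_1
begin
lift_definition zero_ps :: ps is "\<lambda>m. 0" .
lift_definition one_ps :: ps is "sf_const 1" .
lift_definition plus_ps :: "ps \<Rightarrow> ps \<Rightarrow> ps" is sf_add .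
lift_definition minus_ps :: "ps \<Rightarrow> ps \<Rightarrow> ps" is sf_sub .
lift_definition uminus_ps :: "ps \<Rightarrow> ps" is sf_neg .
lift_definition times_ps :: "ps \<Rightarrow> ps \<Rightarrow> ps" is sf_mult .
instance
proof
  fix a b c :: ps
  show "a * b * c = a * (b * c)"
    by transfer (rule sf_mult_assoc)
  show "a * b = b * a"
    by transfer (simp add: fun_eq_iff sf_mult_dec, subst dec_swap, simp add: mult.commute)
  show "1 * a = a"
    by transfer (simp add: fun_eq_iff sf_mult_dec sf_const_def dec_empty_left)
  show "(a + b) * c = a * c + b * c"
    by transfer (simp add: fun_eq_iff sf_mult_dec sf_add_def algebra_simps sum.distrib)
  show "a + b + c = a + (b + c)" by transfer (simp add: sf_add_def add.assoc)
  show "a + b = b + a" by transfer (simp add: sf_add_def add.commute)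
  show "0 + a = a" by transfer (simp add: sf_add_def)
  show "- a + a = 0" by transfer (simp add: sf_add_def sf_neg_def)
  show "a - b = a + - b" by transfer (simp add: sf_add_def sf_neg_def sf_sub_def)
  show "(0::ps) \<noteq> 1" by transfer (auto simp: sf_const_def fun_eq_iff)
qed
end

lemma coeff_0[simp]: "coeff 0 m = 0" by transfer simp
lemma coeff_1: "coeff 1 m = (if m = {#} then 1 else 0)" by transfer (simp add: sf_const_def)
lemma coeff_add[simp]: "coeff (f + g) m = coeff f m + coeff g m" by transfer (simp add: sf_add_def)
lemma coeff_diff[simp]: "coeff (f - g) m = coeff f m - coeff g m" by transfer (simp add: sf_sub_def)
lemma coeff_neg[simp]: "coeff (- f) m = - coeff f m" by transfer (simp add: sf_neg_def)
lemma coeff_mult: "coeff (f * g) m = (\<Sum>p\<in>dec m. coeff f (fst p) * coeff g (snd p))"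
  by transfer (simp add: sf_mult_dec)


definition phi :: "nat \<Rightarrow> nat \<Rightarrow> nat" where "phi k i = Suc i * k - 1"
abbreviation Phi :: "nat \<Rightarrow> nat multiset \<Rightarrow> nat multiset" where "Phi k \<equiv> image_mset (phi k)"

lemma inj_phi: "k > 0 \<Longrightarrow> inj (phi k)"
proof (rule injI)
  fix x y assume k: "k > 0" and "phi k x = phi k y"
  then have "Suc x * k - 1 = Suc y * k - 1" by (simp add: phi_def)
  moreover have "Suc x * k \<ge> 1" "Suc y * k \<ge> 1" using k by simp_all
  ultimately have "Suc x * k = Suc y * k" by linarith
  then show "x = y" using k by simp
qed

lemma inj_Phi: assumes "k > 0" shows "inj (Phi k)"
proof
  fix a b assume "Phi k a = Phi k b"
  then have "image_mset (inv (phi k)) (Phi k a) = image_mset (inv (phi k)) (Phi k b)" by simp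
  then show "a = b" using inj_phi[OF assms] by (simp add: multiset.map_comp)
qed

lemma phi_1[simp]: "phi 1 = id" by (auto simp: phi_def)
lemma phi_comp: "phi j (phi k i) = phi (j * k) i" if "k > 0"
  using that by (cases k) (auto simp: phi_def algebra_simps)
lemma Suc_phi: "k > 0 \<Longrightarrow> Suc (phi k i) = Suc i * k"
  by (simp add: phi_def)
lemma wt_Phi: "k > 0 \<Longrightarrow> sf_wt (Phi k a) = k * sf_wt a"
  by (induct a) (auto simp: Suc_phi algebra_simps)

lift_definition pc :: "nat \<Rightarrow> ps \<Rightarrow> ps" is sf_pleth_p .

lemma coeff_pc: "coeff (pc k f) m = (\<Sum>a\<in>{a. Phi k a = m}. coeff f a)"
  by transfer (simp only: sf_pleth_p_def phi_def[abs_def])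

lemma coeff_pc_img[simp]: "k > 0 \<Longrightarrow> coeff (pc k f) (Phi k a) = coeff f a"
proof -
  assume k: "k > 0"
  have "{a'. Phi k a' = Phi k a} = {a}" using inj_Phi[OF k] by (auto dest: injD)
  then show ?thesis by (simp add: coeff_pc)
qed

lemma coeff_pc_nimg: "m \<notin> range (Phi k) \<Longrightarrow> coeff (pc k f) m = 0"
proof -
  assume "m \<notin> range (Phi k)"
  then have "{a. Phi k a = m} = {}" by auto
  then show ?thesis by (simp add: coeff_pc)
qed

lemma dec_Phi: "dec (Phi k a) = (\<lambda>p. (Phi k (fst p), Phi k (snd p))) ` dec a"
proof
  show "dec (Phi k a) \<subseteq> (\<lambda>p. (Phi k (fst p), Phi k (snd p))) ` dec a"
  proof
    fix q assume "q \<in> dec (Phi k a)"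
    then have "Phi k a = fst q + snd q" by (simp add: dec_def)
    then obtain b c where "a = b + c" "fst q = Phi k b" "snd q = Phi k c"
      by (metis image_mset_eq_plusD)
    then show "q \<in> (\<lambda>p. (Phi k (fst p), Phi k (snd p))) ` dec a"
      by (intro image_eqI[of _ _ "(b,c)"]) (auto simp: dec_def prod_eq_iff)
  qed
qed (auto simp: dec_def)

lemma pc_mult: assumes k: "k > 0" shows "pc k (f * g) = pc k f * pc k g"
proof (rule ps_eqI)
  fix m
  show "coeff (pc k (f * g)) m = coeff (pc k f * pc k g) m"
  proof (cases "m \<in> range (Phi k)")
    case True
    then obtain a where a: "m = Phi k a" by auto
    have inj: "inj_on (\<lambda>p. (Phi k (fst p), Phi k (snd p))) (dec a)"
      using inj_Phi[OF k] by (auto simp: inj_on_def dest: injD)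
    show ?thesis unfolding a coeff_mult dec_Phi
      by (subst sum.reindex[OF inj]) (simp add: k coeff_mult)
  next
    case False
    have "coeff (pc k f * pc k g) m = 0" unfolding coeff_mult
    proof (rule sum.neutral, rule ballI)
      fix p assume p: "p \<in> dec m"
      show "coeff (pc k f) (fst p) * coeff (pc k g) (snd p) = 0"
      proof (cases "fst p \<in> range (Phi k) \<and> snd p \<in> range (Phi k)")
        case True
        then obtain a b where "fst p = Phi k a" "snd p = Phi k b" by auto
        then have "m = Phi k (a + b)" using p by (auto simp: dec_def)
        then show ?thesis using False by blast
      qed (auto simp: coeff_pc_nimg)
    qed
    then show ?thesis using False by (simp add: coeff_pc_nimg)
  qed
qed

lemma pc_add: "pc k (f + g) = pc k f + pc k g"
  by (rule ps_eqI) (simp add: coeff_pc sum.distrib)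
lemma pc_neg: "pc k (- f) = - pc k f"
  by (rule ps_eqI) (simp add: coeff_pc sum_negf)
lemma pc_diff: "pc k (f - g) = pc k f - pc k g"
  by (rule ps_eqI) (simp add: coeff_pc sum_subtractf)
lemma pc_0[simp]: "pc k 0 = 0"
  by (rule ps_eqI) (simp add: coeff_pc)

lemma Phi_empty_iff: "Phi k a = {#} \<longleftrightarrow> a = {#}" by simp

lemma pc_1: assumes "k > 0" shows "pc k 1 = 1"
proof (rule ps_eqI)
  fix m show "coeff (pc k 1) m = coeff 1 m"
  proof (cases "m \<in> range (Phi k)")
    case True then obtain a where a: "m = Phi k a" by auto
    have "coeff (pc k 1) (Phi k a) = coeff 1 (Phi k a)"
      using assms by (simp only: coeff_pc_img) (simp add: coeff_1)
    then show ?thesis using a by simp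
  next
    case False
    have "m \<noteq> {#}"
    proof
      assume "m = {#}" then have "m = Phi k {#}" by simp
      then show False using False by blast
    qed
    then show ?thesis using False by (simp add: coeff_pc_nimg coeff_1)
  qed
qed

lemma pc_id[simp]: "pc 1 f = f"
proof (rule ps_eqI)
  fix m
  have "m = Phi 1 m" by (induct m) (auto simp: phi_def)
  then show "coeff (pc 1 f) m = coeff f m" by (metis coeff_pc_img zero_less_one)
qed

lemma pc_pc: assumes "j > 0" "k > 0" shows "pc j (pc k f) = pc (j * k) f"
proof (rule ps_eqI)
  fix m
  have jk: "j * k > 0" using assms by simp
  have Pc: "Phi j (Phi k a) = Phi (j*k) a" for a
    using assms(2) by (simp add: multiset.map_comp o_def phi_comp)
  show "coeff (pc j (pc k f)) m = coeff (pc (j * k) f) m"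
  proof (cases "m \<in> range (Phi (j*k))")
    case True then obtain a where a: "m = Phi (j*k) a" by auto
    have "coeff (pc j (pc k f)) (Phi j (Phi k a)) = coeff f a" using assms by simp
    moreover have "coeff (pc (j*k) f) (Phi (j*k) a) = coeff f a" using jk by simp
    ultimately show ?thesis using a Pc by metis
  next
    case False
    show ?thesis
    proof (cases "m \<in> range (Phi j)")
      case True then obtain b where b: "m = Phi j b" by auto
      have "b \<notin> range (Phi k)" using False Pc b by auto
      then show ?thesis using b False assms by (simp add: coeff_pc_nimg)
    next
      case F2: False then show ?thesis using False by (simp add: coeff_pc_nimg)
    qed
  qed
qed


lemma mem_dec[simp]: "p \<in> dec m \<longleftrightarrow> fst p + snd p = m" by (simp add: dec_def)
lemma dec_empty: "dec {#} = {({#},{#})}" by (auto simp: dec_def)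

lift_definition delta :: "ps \<Rightarrow> ps" is "\<lambda>f m. of_nat (sf_wt m) * f m" .
lift_definition tau :: "ps \<Rightarrow> ps" is "\<lambda>f m. (-1) ^ size m * f m" .
lift_definition cst :: "rat \<Rightarrow> ps" is sf_const .
lift_definition pp :: "nat \<Rightarrow> ps" is sf_p .

lemma coeff_delta: "coeff (delta f) m = of_nat (sf_wt m) * coeff f m" by transfer simp
lemma coeff_tau: "coeff (tau f) m = (-1) ^ size m * coeff f m" by transfer simp
lemma coeff_cst: "coeff (cst c) m = (if m = {#} then c else 0)" by transfer (simp add: sf_const_def)

lemma coeff_cst_mult: "coeff (cst c * f) m = c * coeff f m"
proof -
  have "coeff (cst c * f) m = (\<Sum>p\<in>dec m. if p = ({#}, m) then c * coeff f m else 0)"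
    unfolding coeff_mult by (intro sum.cong refl) (auto simp: coeff_cst)
  also have "\<dots> = c * coeff f m" by (subst sum.delta) simp_all
  finally show ?thesis .
qed

lemma cst_1[simp]: "cst 1 = 1" by (rule ps_eqI) (simp add: coeff_cst coeff_1)
lemma cst_0[simp]: "cst 0 = 0" by (rule ps_eqI) (simp add: coeff_cst)
lemma cst_add: "cst (a + b) = cst a + cst b" by (rule ps_eqI) (simp add: coeff_cst)
lemma cst_neg: "cst (- a) = - cst a" by (rule ps_eqI) (simp add: coeff_cst)
lemma cst_diff: "cst (a - b) = cst a - cst b" by (rule ps_eqI) (simp add: coeff_cst)
lemma cst_mult: "cst (a * b) = cst a * cst b" by (rule ps_eqI) (simp add: coeff_cst_mult coeff_cst)
lemma cst_of_nat: "cst (of_nat n) = of_nat n"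
  by (induct n) (simp_all add: cst_add)

lemma delta_add[simp]: "delta (f + g) = delta f + delta g"
  by (rule ps_eqI) (simp add: coeff_delta algebra_simps)
lemma delta_neg[simp]: "delta (- f) = - delta f"
  by (rule ps_eqI) (simp add: coeff_delta algebra_simps)
lemma delta_diff[simp]: "delta (f - g) = delta f - delta g"
  by (rule ps_eqI) (simp add: coeff_delta algebra_simps)
lemma delta_cst[simp]: "delta (cst c) = 0"
  by (rule ps_eqI) (simp add: coeff_delta coeff_cst)
lemma delta_1[simp]: "delta 1 = 0"
  using delta_cst[of 1] by simp
lemma delta_0[simp]: "delta 0 = 0"
  using delta_cst[of 0] by simp
lemma delta_cst_mult: "delta (cst c * f) = cst c * delta f"
  by (rule ps_eqI) (simp add: coeff_delta coeff_cst_mult)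

lemma delta_mult: "delta (f * g) = delta f * g + f * delta g"
proof (rule ps_eqI)
  fix m
  have "coeff (delta (f * g)) m = (\<Sum>p\<in>dec m. of_nat (sf_wt (fst p) + sf_wt (snd p)) * (coeff f (fst p) * coeff g (snd p)))"
    unfolding coeff_delta coeff_mult sum_distrib_left
    by (intro sum.cong refl) auto
  also have "\<dots> = (\<Sum>p\<in>dec m. of_nat (sf_wt (fst p)) * coeff f (fst p) * coeff g (snd p)) +
                   (\<Sum>p\<in>dec m. coeff f (fst p) * (of_nat (sf_wt (snd p)) * coeff g (snd p)))"
    by (simp add: sum.distrib[symmetric] algebra_simps)
  also have "\<dots> = coeff (delta f * g + f * delta g) m"
    by (simp only: coeff_add coeff_mult coeff_delta)
  finally show "coeff (delta (f * g)) m = coeff (delta f * g + f * delta g) m" .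
qed

lemma delta_power: "delta (f ^ Suc n) = of_nat (Suc n) * f ^ n * delta f"
  by (induct n) (simp_all add: delta_mult algebra_simps)

lemma delta_pc: assumes k: "k > 0" shows "delta (pc k f) = of_nat k * pc k (delta f)"
proof (rule ps_eqI)
  fix m
  show "coeff (delta (pc k f)) m = coeff (of_nat k * pc k (delta f)) m"
  proof (cases "m \<in> range (Phi k)")
    case True then obtain a where "m = Phi k a" by auto
    then show ?thesis using k by (simp add: coeff_delta wt_Phi coeff_cst_mult flip: cst_of_nat)
  next
    case False then show ?thesis by (simp add: coeff_delta coeff_pc_nimg coeff_cst_mult flip: cst_of_nat)
  qed
qed

lemma delta_eqI: assumes "delta f = delta g" "coeff f {#} = coeff g {#}" shows "f = g"
proof (rule ps_eqI)
  fix m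
  show "coeff f m = coeff g m"
  proof (cases "m = {#}")
    case False
    then have "sf_wt m \<noteq> 0" by simp
    then show ?thesis using arg_cong[OF assms(1), of "\<lambda>h. coeff h m"] by (simp add: coeff_delta)
  qed (use assms in simp)
qed

lemma coeff_mult_empty: "coeff (f * g) {#} = coeff f {#} * coeff g {#}"
  by (simp add: coeff_mult dec_empty)

lemma tau_add[simp]: "tau (f + g) = tau f + tau g"
  by (rule ps_eqI) (simp add: coeff_tau algebra_simps)
lemma tau_neg[simp]: "tau (- f) = - tau f"
  by (rule ps_eqI) (simp add: coeff_tau algebra_simps)
lemma tau_diff[simp]: "tau (f - g) = tau f - tau g"
  by (rule ps_eqI) (simp add: coeff_tau algebra_simps)
lemma tau_cst[simp]: "tau (cst c) = cst c"
  by (rule ps_eqI) (simp add: coeff_tau coeff_cst)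
lemma tau_1[simp]: "tau 1 = 1"
  using tau_cst[of 1] by simp
lemma tau_0[simp]: "tau 0 = 0"
  using tau_cst[of 0] by simp
lemma tau_mult: "tau (f * g) = tau f * tau g"
proof (rule ps_eqI)
  fix m
  show "coeff (tau (f * g)) m = coeff (tau f * tau g) m"
    unfolding coeff_tau coeff_mult sum_distrib_left
    by (intro sum.cong refl) (auto simp: power_add)
qed
lemma tau_pc: assumes k: "k > 0" shows "tau (pc k f) = pc k (tau f)"
proof (rule ps_eqI)
  fix m
  show "coeff (tau (pc k f)) m = coeff (pc k (tau f)) m"
  proof (cases "m \<in> range (Phi k)")
    case True then obtain a where "m = Phi k a" by auto
    then show ?thesis using k by (simp add: coeff_tau)
  next
    case False then show ?thesis by (simp add: coeff_tau coeff_pc_nimg)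
  qed
qed
lemma pc_cst: assumes "k > 0" shows "pc k (cst c) = cst c"
proof -
  have "cst c = cst c * 1" by simp
  have "pc k (cst c) = pc k (cst c * 1)" by simp
  also have "cst c * 1 = 1 + (cst c - 1)" by simp
  finally show ?thesis
  proof -
    have "\<And>m. coeff (pc k (cst c)) m = coeff (cst c) m"
    proof -
      fix m show "coeff (pc k (cst c)) m = coeff (cst c) m"
      proof (cases "m \<in> range (Phi k)")
        case True then obtain a where "m = Phi k a" by auto
        then show ?thesis using assms by (simp add: coeff_cst)
      next
        case False
        have "m \<noteq> {#}"
        proof
          assume "m = {#}" then have "m = Phi k {#}" by simp
          then show False using False by blast
        qed
        then show ?thesis using False by (simp add: coeff_pc_nimg coeff_cst)
      qed
    qed
    then show ?thesis by (rule ps_eqI)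
  qed
qed

lemma coeff_pp: "coeff (pp k) m = (if m = {# k - 1 #} then 1 else 0)"
  by transfer (simp add: sf_p_def)
lemma tau_pp1: "tau (pp 1) = - pp 1"
  by (rule ps_eqI) (simp add: coeff_tau coeff_pp)


definition ordn :: "ps \<Rightarrow> nat \<Rightarrow> bool" where
  "ordn f n \<longleftrightarrow> (\<forall>m. sf_wt m < n \<longrightarrow> coeff f m = 0)"

lemma ordnD: "ordn f n \<Longrightarrow> sf_wt m < n \<Longrightarrow> coeff f m = 0" by (simp add: ordn_def)
lemma ordn_0[simp]: "ordn f 0" by (simp add: ordn_def)
lemma ordn_zero[simp]: "ordn 0 n" by (simp add: ordn_def)
lemma ordn_mono: "ordn f n \<Longrightarrow> k \<le> n \<Longrightarrow> ordn f k" by (simp add: ordn_def)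
lemma ordn_1: "ordn f 1 \<longleftrightarrow> coeff f {#} = 0" by (auto simp: ordn_def)
lemma ordn_add: "ordn f n \<Longrightarrow> ordn g n \<Longrightarrow> ordn (f + g) n" by (simp add: ordn_def)
lemma ordn_neg: "ordn f n \<Longrightarrow> ordn (- f) n" by (simp add: ordn_def)
lemma ordn_diff: "ordn f n \<Longrightarrow> ordn g n \<Longrightarrow> ordn (f - g) n" by (simp add: ordn_def)
lemma ordn_delta: "ordn f n \<Longrightarrow> ordn (delta f) n" by (simp add: ordn_def coeff_delta)
lemma ordn_tau: "ordn f n \<Longrightarrow> ordn (tau f) n" by (simp add: ordn_def coeff_tau)
lemma ordn_cst_mult: "ordn f n \<Longrightarrow> ordn (cst c * f) n" by (simp add: ordn_def coeff_cst_mult)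
lemma ordn_mult: assumes "ordn f a" "ordn g b" shows "ordn (f * g) (a + b)"
  unfolding ordn_def
proof (intro allI impI)
  fix m assume m: "sf_wt m < a + b"
  show "coeff (f * g) m = 0" unfolding coeff_mult
  proof (rule sum.neutral, rule ballI)
    fix p assume "p \<in> dec m"
    then have "sf_wt (fst p) + sf_wt (snd p) < a + b" using m by (metis mem_dec sf_wt_add)
    then have "sf_wt (fst p) < a \<or> sf_wt (snd p) < b" by linarith
    then show "coeff f (fst p) * coeff g (snd p) = 0" using assms by (auto simp: ordn_def)
  qed
qed
lemma ordn_mult1: "ordn f a \<Longrightarrow> ordn (f * g) a"
  using ordn_mult[of f a g 0] by simp
lemma ordn_mult2: "ordn g a \<Longrightarrow> ordn (f * g) a"
  using ordn_mult[of f 0 g a] by simp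
lemma ordn_power: "ordn f 1 \<Longrightarrow> ordn (f ^ n) n"
  by (induct n) (auto dest: ordn_mult)
lemma ordn_pc: assumes k: "k > 0" and f: "ordn f n" shows "ordn (pc k f) (k * n)"
  unfolding ordn_def
proof (intro allI impI)
  fix m assume m: "sf_wt m < k * n"
  show "coeff (pc k f) m = 0"
  proof (cases "m \<in> range (Phi k)")
    case True then obtain a where a: "m = Phi k a" by auto
    then have "sf_wt a < n" using m k by (simp add: wt_Phi)
    then show ?thesis using a k f by (simp add: ordn_def)
  qed (simp add: coeff_pc_nimg)
qed
lemma ordn_pc1: assumes k: "k > 0" and f: "ordn f 1" shows "ordn (pc k f) k"
  using ordn_pc[OF k f] by simp

lemma ordn_pp: "k > 0 \<Longrightarrow> ordn (pp k) k"
  by (auto simp: ordn_def coeff_pp)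

definition lf :: "('i \<Rightarrow> ps) \<Rightarrow> bool" where
  "lf F \<longleftrightarrow> (\<forall>n. finite {i. \<exists>m. sf_wt m \<le> n \<and> coeff (F i) m \<noteq> 0})"

lift_definition ssum :: "('i \<Rightarrow> ps) \<Rightarrow> ps" is "\<lambda>F m. Sum_any (\<lambda>i. F i m)" .

lemma coeff_ssum: "coeff (ssum F) m = Sum_any (\<lambda>i. coeff (F i) m)"
  by transfer simp

lemma lf_fin: "lf F \<Longrightarrow> finite {i. coeff (F i) m \<noteq> 0}"
  unfolding lf_def by (erule allE[of _ "sf_wt m"]) (erule finite_subset[rotated], auto)

lemma lf_fin2: "lf F \<Longrightarrow> finite {i. \<exists>m\<in>A. coeff (F i) m \<noteq> 0}" if "finite A"
proof -
  assume "lf F"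
  have "{i. \<exists>m\<in>A. coeff (F i) m \<noteq> 0} = (\<Union>m\<in>A. {i. coeff (F i) m \<noteq> 0})" by auto
  then show ?thesis using that lf_fin[OF \<open>lf F\<close>] by simp
qed

lemma lf_ordI: assumes "\<And>i. ordn (F i) (w i)" "\<And>n. finite {i. w i \<le> n}" shows "lf F"
  unfolding lf_def
proof
  fix n
  show "finite {i. \<exists>m. sf_wt m \<le> n \<and> coeff (F i) m \<noteq> 0}"
  proof (rule finite_subset[OF _ assms(2)[of n]])
    show "{i. \<exists>m. sf_wt m \<le> n \<and> coeff (F i) m \<noteq> 0} \<subseteq> {i. w i \<le> n}"
      using assms(1) by (auto simp: ordn_def) (meson le_trans not_le_imp_less)
  qed
qed

lemma lf_mono: assumes "lf F" "\<And>i m. coeff (G i) m \<noteq> 0 \<Longrightarrow> \<exists>m'. sf_wt m' \<le> sf_wt m \<and> coeff (F i) m' \<noteq> 0"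
  shows "lf G"
  unfolding lf_def
proof
  fix n
  show "finite {i. \<exists>m. sf_wt m \<le> n \<and> coeff (G i) m \<noteq> 0}"
    using assms(1)[unfolded lf_def, rule_format, of n]
    by (rule finite_subset[rotated]) (auto dest!: assms(2) intro: le_trans)
qed

lemma lf_add: assumes "lf F" "lf G" shows "lf (\<lambda>i. F i + G i)"
  unfolding lf_def
proof
  fix n
  show "finite {i. \<exists>m. sf_wt m \<le> n \<and> coeff (F i + G i) m \<noteq> 0}"
    using assms[unfolded lf_def, rule_format, of n]
    by (rule_tac finite_subset[of _ "{i. \<exists>m. sf_wt m \<le> n \<and> coeff (F i) m \<noteq> 0} \<union> {i. \<exists>m. sf_wt m \<le> n \<and> coeff (G i) m \<noteq> 0}"]) auto
qed

lemma lf_neg: "lf F \<Longrightarrow> lf (\<lambda>i. - F i)"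
  by (erule lf_mono) auto
lemma lf_delta: "lf F \<Longrightarrow> lf (\<lambda>i. delta (F i))"
  by (erule lf_mono) (auto simp: coeff_delta)
lemma lf_tau: "lf F \<Longrightarrow> lf (\<lambda>i. tau (F i))"
  by (erule lf_mono) (auto simp: coeff_tau)
lemma lf_cst_mult: "lf F \<Longrightarrow> lf (\<lambda>i. cst (c i) * F i)"
  by (erule lf_mono) (auto simp: coeff_cst_mult)
lemma lf_mult_right: assumes "lf F" shows "lf (\<lambda>i. F i * g)"
proof (rule lf_mono[OF assms])
  fix i m assume "coeff (F i * g) m \<noteq> 0"
  then obtain p where "p \<in> dec m" "coeff (F i) (fst p) \<noteq> 0"
    unfolding coeff_mult by (metis (no_types, lifting) mult_zero_left sum.neutral)
  moreover have "sf_wt (fst p) \<le> sf_wt m" using \<open>p \<in> dec m\<close> by (metis le_add1 mem_dec sf_wt_add)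
  ultimately show "\<exists>m'. sf_wt m' \<le> sf_wt m \<and> coeff (F i) m' \<noteq> 0" by blast
qed
lemma lf_mult_left: assumes "lf F" shows "lf (\<lambda>i. g * F i)"
  using lf_mult_right[OF assms, of g] by (simp add: mult.commute)
lemma lf_pc: assumes "lf F" "k > 0" shows "lf (\<lambda>i. pc k (F i))"
proof (rule lf_mono[OF assms(1)])
  fix i m assume *: "coeff (pc k (F i)) m \<noteq> 0"
  then have "m \<in> range (Phi k)" using coeff_pc_nimg by blast
  then obtain a where a: "m = Phi k a" by auto
  then show "\<exists>m'. sf_wt m' \<le> sf_wt m \<and> coeff (F i) m' \<noteq> 0"
    using * assms(2) by (intro exI[of _ a]) (auto simp: wt_Phi)
qed
lemma lf_reindex_inj: assumes "lf F" "inj h" shows "lf (\<lambda>i. F (h i))"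
  unfolding lf_def
proof
  fix n
  have "finite (h -` {i. \<exists>m. sf_wt m \<le> n \<and> coeff (F i) m \<noteq> 0})"
    using finite_vimageI[OF assms(1)[unfolded lf_def, rule_format, of n] assms(2)] .
  then show "finite {i. \<exists>m. sf_wt m \<le> n \<and> coeff (F (h i)) m \<noteq> 0}" by (simp add: vimage_def)
qed

lemma Sum_any_sum_swap:
  assumes "finite A" "\<And>a. a \<in> A \<Longrightarrow> finite {i. h i a \<noteq> (0::'b::comm_monoid_add)}"
  shows "(\<Sum>a\<in>A. Sum_any (\<lambda>i. h i a)) = Sum_any (\<lambda>i. \<Sum>a\<in>A. h i a)"
proof -
  define U where "U = (\<Union>a\<in>A. {i. h i a \<noteq> 0})"
  have U: "finite U" using assms by (simp add: U_def)
  have "Sum_any (\<lambda>i. \<Sum>a\<in>A. h i a) = (\<Sum>i\<in>U. \<Sum>a\<in>A. h i a)"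
    by (rule Sum_any.expand_superset[OF U]) (auto simp: U_def elim: sum.not_neutral_contains_not_neutral)
  also have "\<dots> = (\<Sum>a\<in>A. \<Sum>i\<in>U. h i a)" by (rule sum.swap)
  also have "\<dots> = (\<Sum>a\<in>A. Sum_any (\<lambda>i. h i a))"
    by (intro sum.cong refl, rule Sum_any.expand_superset[OF U, symmetric]) (auto simp: U_def)
  finally show ?thesis ..
qed

lemma ssum_add: assumes "lf F" "lf G" shows "ssum (\<lambda>i. F i + G i) = ssum F + ssum G"
  by (rule ps_eqI) (simp add: coeff_ssum Sum_any.distrib lf_fin[OF assms(1)] lf_fin[OF assms(2)])
lemma ssum_neg: "ssum (\<lambda>i. - F i) = - ssum F"
proof (rule ps_eqI)
  fix m
  have "Sum_any (\<lambda>i. - coeff (F i) m) = - Sum_any (\<lambda>i. coeff (F i) m)"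
    using Sum_any_right_distrib[of "\<lambda>i. coeff (F i) m" "-1::rat"]
    by (cases "finite {i. coeff (F i) m \<noteq> 0}") auto
  then show "coeff (ssum (\<lambda>i. - F i)) m = coeff (- ssum F) m" by (simp add: coeff_ssum)
qed
lemma ssum_diff: assumes "lf F" "lf G" shows "ssum (\<lambda>i. F i - G i) = ssum F - ssum G"
  using ssum_add[OF assms(1) lf_neg[OF assms(2)]] by (simp add: ssum_neg)

lemma ssum_scal: assumes "lf F" shows "coeff (ssum (\<lambda>i. F i)) m * c = Sum_any (\<lambda>i. coeff (F i) m * c)"
  by (simp add: coeff_ssum Sum_any_left_distrib lf_fin[OF assms])

lemma ssum_mult_right: assumes "lf F" shows "ssum F * g = ssum (\<lambda>i. F i * g)"
proof (rule ps_eqI)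
  fix m
  have "coeff (ssum F * g) m = (\<Sum>p\<in>dec m. Sum_any (\<lambda>i. coeff (F i) (fst p) * coeff g (snd p)))"
    unfolding coeff_mult by (intro sum.cong refl) (simp add: ssum_scal[OF assms])
  also have "\<dots> = Sum_any (\<lambda>i. \<Sum>p\<in>dec m. coeff (F i) (fst p) * coeff g (snd p))"
    by (rule Sum_any_sum_swap) (auto intro: finite_subset[OF _ lf_fin[OF assms]])
  finally show "coeff (ssum F * g) m = coeff (ssum (\<lambda>i. F i * g)) m" by (simp add: coeff_ssum coeff_mult)
qed
lemma ssum_mult_left: assumes "lf F" shows "g * ssum F = ssum (\<lambda>i. g * F i)"
  using ssum_mult_right[OF assms, of g] by (simp add: mult.commute)

lemma ssum_delta: "delta (ssum F) = ssum (\<lambda>i. delta (F i))"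
proof (rule ps_eqI)
  fix m
  show "coeff (delta (ssum F)) m = coeff (ssum (\<lambda>i. delta (F i))) m"
    using Sum_any_right_distrib[of "\<lambda>i. coeff (F i) m" "of_nat (sf_wt m)"]
    by (cases "finite {i. coeff (F i) m \<noteq> 0}"; cases "sf_wt m = 0") (auto simp: coeff_delta coeff_ssum)
qed
lemma ssum_tau: "tau (ssum F) = ssum (\<lambda>i. tau (F i))"
proof (rule ps_eqI)
  fix m
  show "coeff (tau (ssum F)) m = coeff (ssum (\<lambda>i. tau (F i))) m"
    using Sum_any_right_distrib[of "\<lambda>i. coeff (F i) m" "(-1)^size m"]
    by (cases "finite {i. coeff (F i) m \<noteq> 0}") (auto simp: coeff_tau coeff_ssum)
qed
lemma ssum_cst_mult: "cst c * ssum F = ssum (\<lambda>i. cst c * F i)"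
proof (rule ps_eqI)
  fix m
  show "coeff (cst c * ssum F) m = coeff (ssum (\<lambda>i. cst c * F i)) m"
  proof (cases "c = 0")
    case False
    then have e: "{i. c * coeff (F i) m \<noteq> 0} = {i. coeff (F i) m \<noteq> 0}" by simp
    show ?thesis
    proof (cases "finite {i. coeff (F i) m \<noteq> 0}")
      case True
      then show ?thesis using Sum_any_right_distrib[of "\<lambda>i. coeff (F i) m" c]
        by (simp add: coeff_cst_mult coeff_ssum)
    next
      case False
      then have "Sum_any (\<lambda>i. c * coeff (F i) m) = 0"
        by (intro Sum_any.infinite) (use False in \<open>simp only: e\<close>)
      then show ?thesis using False by (simp add: coeff_cst_mult coeff_ssum)
    qed
  qed (simp add: coeff_cst_mult coeff_ssum)
qed
lemma ssum_pc: assumes "lf F" "k > 0" shows "pc k (ssum F) = ssum (\<lambda>i. pc k (F i))"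
proof (rule ps_eqI)
  fix m
  show "coeff (pc k (ssum F)) m = coeff (ssum (\<lambda>i. pc k (F i))) m"
  proof (cases "m \<in> range (Phi k)")
    case True then obtain a where a: "m = Phi k a" by auto
    show ?thesis unfolding a using assms(2) by (simp add: coeff_ssum)
  next
    case False then show ?thesis by (simp add: coeff_pc_nimg coeff_ssum)
  qed
qed

lemma ssum_cong: "(\<And>i. F i = G i) \<Longrightarrow> ssum F = ssum G" by metis

lemma ssum_zero: "(\<And>i. F i = 0) \<Longrightarrow> ssum F = 0"
  by (rule ps_eqI) (simp add: coeff_ssum)

lemma ssum_finite: assumes "finite A" "\<And>i. i \<notin> A \<Longrightarrow> F i = 0" shows "ssum F = sum F A"
proof (rule ps_eqI)
  fix m
  have "coeff (ssum F) m = (\<Sum>i\<in>A. coeff (F i) m)"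
    unfolding coeff_ssum by (rule Sum_any.expand_superset[OF assms(1)]) (use assms(2) in force)
  also have "\<dots> = coeff (sum F A) m"
    using assms(1) by (induct A rule: finite_induct) auto
  finally show "coeff (ssum F) m = coeff (sum F A) m" .
qed

lemma ssum_single: "ssum (\<lambda>i. if i = a then f else 0) = f"
  by (subst ssum_finite[of "{a}"]) auto

lemma ssum_reindex_bij: assumes "bij h" shows "ssum (\<lambda>i. F (h i)) = ssum F"
proof (rule ps_eqI)
  fix m
  show "coeff (ssum (\<lambda>i. F (h i))) m = coeff (ssum F) m"
    unfolding coeff_ssum by (rule Sum_any.reindex_cong[OF assms, symmetric]) (simp add: o_def)
qed

lemma ssum_reindex_inj: assumes "inj h" "\<And>j. j \<notin> range h \<Longrightarrow> F j = 0"
  shows "ssum F = ssum (\<lambda>i. F (h i))"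
proof (rule ps_eqI)
  fix m
  define S where "S = {i. coeff (F (h i)) m \<noteq> 0}"
  have sup: "{j. coeff (F j) m \<noteq> 0} = h ` S"
  proof
    show "{j. coeff (F j) m \<noteq> 0} \<subseteq> h ` S"
    proof
      fix j assume j: "j \<in> {j. coeff (F j) m \<noteq> 0}"
      then have "j \<in> range h" using assms(2) by fastforce
      then obtain i where "j = h i" by auto
      then show "j \<in> h ` S" using j by (auto simp: S_def)
    qed
  qed (auto simp: S_def)
  show "coeff (ssum F) m = coeff (ssum (\<lambda>i. F (h i))) m"
  proof (cases "finite S")
    case True
    have "Sum_any (\<lambda>j. coeff (F j) m) = (\<Sum>j\<in>h ` S. coeff (F j) m)"
      by (rule Sum_any.expand_superset) (use True sup in auto)
    also have "\<dots> = (\<Sum>i\<in>S. coeff (F (h i)) m)"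
      by (rule sum.reindex[OF inj_on_subset[OF assms(1)], unfolded o_def]) simp
    also have "\<dots> = Sum_any (\<lambda>i. coeff (F (h i)) m)"
      by (rule Sum_any.expand_superset[symmetric]) (use True in \<open>auto simp: S_def\<close>)
    finally show ?thesis by (simp add: coeff_ssum)
  next
    case False
    then have "infinite (h ` S)" using finite_imageD[OF _ inj_on_subset[OF assms(1)]] by blast
    then show ?thesis using False by (simp add: coeff_ssum sup S_def)
  qed
qed

lemma ssum_pair: assumes "lf (\<lambda>(i,j). G i j)"
  shows "ssum (\<lambda>i. ssum (\<lambda>j. G i j)) = ssum (\<lambda>(i,j). G i j)"
proof (rule ps_eqI)
  fix m
  have fin: "finite {p. coeff ((\<lambda>(i,j). G i j) p) m \<noteq> 0}" by (rule lf_fin[OF assms])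
  have fin1: "finite {i. \<exists>j. coeff (G i j) m \<noteq> 0}"
    using finite_imageI[OF fin, of fst] by (rule finite_subset[rotated]) (force simp: image_iff)
  have fin2: "finite {j. \<exists>i. coeff (G i j) m \<noteq> 0}"
    using finite_imageI[OF fin, of snd] by (rule finite_subset[rotated]) (force simp: image_iff)
  have "Sum_any (\<lambda>i. Sum_any (\<lambda>j. coeff (G i j) m)) = Sum_any (\<lambda>(i,j). coeff (G i j) m)"
    by (rule Sum_any.cartesian_product[OF finite_cartesian_product[OF fin1 fin2]]) simp
  then show "coeff (ssum (\<lambda>i. ssum (\<lambda>j. G i j))) m = coeff (ssum (\<lambda>(i,j). G i j)) m"
    by (simp add: coeff_ssum split_def)
qed

lemma lf_pair_fst: assumes "lf (\<lambda>(i,j). G i j)" shows "lf (\<lambda>i. ssum (\<lambda>j. G i j))"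
  unfolding lf_def
proof
  fix n
  have "finite (fst ` {p. \<exists>m. sf_wt m \<le> n \<and> coeff ((\<lambda>(i,j). G i j) p) m \<noteq> 0})"
    using assms unfolding lf_def by blast
  then show "finite {i. \<exists>m. sf_wt m \<le> n \<and> coeff (ssum (\<lambda>j. G i j)) m \<noteq> 0}"
    by (rule finite_subset[rotated]) (auto simp: coeff_ssum image_iff elim!: Sum_any.not_neutral_obtains_not_neutral; blast)
qed

lemma ssum_shift: assumes "lf F" shows "ssum F = F 0 + ssum (\<lambda>n. F (Suc n))"
proof -
  have l1: "lf (\<lambda>n::nat. if n = 0 then F 0 else 0)"
    unfolding lf_def by (auto intro: finite_subset[of _ "{0}"])
  have l2: "lf (\<lambda>n. if n = 0 then 0 else F n)"
    by (rule lf_mono[OF assms]) (auto split: if_splits)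
  have "ssum F = ssum (\<lambda>n. (if n = 0 then F 0 else 0) + (if n = 0 then 0 else F n))"
    by (rule ssum_cong) simp
  also have "\<dots> = F 0 + ssum (\<lambda>n. if n = 0 then 0 else F n)"
    by (subst ssum_add[OF l1 l2]) (simp add: ssum_single)
  also have "ssum (\<lambda>n. if n = 0 then 0 else F n) = ssum (\<lambda>n. F (Suc n))"
  proof -
    have "\<And>j. j \<notin> range Suc \<Longrightarrow> (if j = 0 then 0 else F j) = 0"
      by (case_tac j) auto
    from ssum_reindex_inj[of Suc, OF _ this] show ?thesis by simp
  qed
  finally show ?thesis .
qed


lemma pc_Suc0[simp]: "pc (Suc 0) f = f" using pc_id by simp

definition monom :: "nat multiset \<Rightarrow> ps \<Rightarrow> ps" where
  "monom lam W = prod_mset (image_mset (\<lambda>i. pc (Suc i) W) lam)"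

lemma mono_empty[simp]: "monom {#} W = 1" by (simp add: monom_def)
lemma mono_add_mset[simp]: "monom (add_mset i lam) W = pc (Suc i) W * monom lam W" by (simp add: monom_def)
lemma mono_plus: "monom (a + b) W = monom a W * monom b W" by (simp add: monom_def)

lemma Rep_prod_list: "coeff (prod_list (map G xs)) = foldr sf_mult (map (\<lambda>x. coeff (G x)) xs) (sf_const 1)"
proof (induct xs)
  case Nil then show ?case by (simp add: one_ps.rep_eq coeff.rep_eq)
next
  case (Cons x xs) then show ?case by (simp add: times_ps.rep_eq coeff.rep_eq)
qed

lemma sf_pleth_mono_eq: "sf_pleth_mono lam (coeff W) = coeff (monom lam W)"
proof -
  have "coeff (monom lam W) = coeff (prod_list (map (\<lambda>i. pc (Suc i) W) (sorted_list_of_multiset lam)))"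
    unfolding monom_def by (metis mset_map mset_sorted_list_of_multiset prod_mset_prod_list)
  also have "\<dots> = sf_pleth_mono lam (coeff W)"
    unfolding Rep_prod_list sf_pleth_mono_def by (simp add: pc.rep_eq coeff.rep_eq)
  finally show ?thesis ..
qed

lift_definition pleth :: "sf \<Rightarrow> ps \<Rightarrow> ps" is sf_pleth .

lemma coeff_pleth: "coeff (pleth g W) m = (\<Sum>lam\<in>{lam. sf_wt lam \<le> sf_wt m}. g lam * coeff (monom lam W) m)"
  by (simp add: pleth.rep_eq sf_pleth_def sf_pleth_mono_eq[of _ W, unfolded coeff.rep_eq] coeff.rep_eq)

lemma ordn_monom: "ordn W 1 \<Longrightarrow> ordn (monom lam W) (sf_wt lam)"
proof (induct lam)
  case empty then show ?case by simp
next
  case (add x lam)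
  have "ordn (pc (Suc x) W) (Suc x)" by (rule ordn_pc1[OF _ add.prems]) simp
  from ordn_mult[OF this add.hyps[OF add.prems]] show ?case by simp
qed

lemma lf_mono_family: assumes W: "ordn W 1" shows "lf (\<lambda>lam. cst (g lam) * monom lam W)"
  by (rule lf_ordI[of _ sf_wt]) (rule ordn_cst_mult[OF ordn_monom[OF W]], rule finite_wt_le)

lemma pleth_ssum: assumes W: "ordn W 1" shows "pleth g W = ssum (\<lambda>lam. cst (g lam) * monom lam W)"
proof (rule ps_eqI)
  fix m
  have "coeff (ssum (\<lambda>lam. cst (g lam) * monom lam W)) m = (\<Sum>lam\<in>{lam. sf_wt lam \<le> sf_wt m}. g lam * coeff (monom lam W) m)"
    unfolding coeff_ssum coeff_cst_mult
  proof (rule Sum_any.expand_superset[OF finite_wt_le])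
    show "{a. g a * coeff (monom a W) m \<noteq> 0} \<subseteq> {lam. sf_wt lam \<le> sf_wt m}"
      using ordnD[OF ordn_monom[OF W]] by (auto simp: not_le[symmetric])
  qed
  then show "coeff (pleth g W) m = coeff (ssum (\<lambda>lam. cst (g lam) * monom lam W)) m"
    by (simp add: coeff_pleth)
qed

lemma pleth_sub: "pleth (sf_sub g h) W = pleth g W - pleth h W"
  by (rule ps_eqI) (simp add: coeff_pleth sf_sub_def algebra_simps sum_subtractf)
lemma pleth_add: "pleth (sf_add g h) W = pleth g W + pleth h W"
  by (rule ps_eqI) (simp add: coeff_pleth sf_add_def algebra_simps sum.distrib)

lemma coeff_pleth_empty: "coeff (pleth g W) {#} = g {#}"
proof -
  have "{lam. sf_wt lam \<le> 0} = {{#}}" by auto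
  then show ?thesis by (simp add: coeff_pleth coeff_1)
qed

lemma pleth_p1: assumes W: "ordn W 1" shows "pleth (sf_p 1) W = W"
proof -
  have "pleth (sf_p 1) W = ssum (\<lambda>lam. if lam = {#0::nat#} then W else 0)"
    unfolding pleth_ssum[OF W] by (rule ssum_cong) (auto simp: sf_p_def)
  then show ?thesis by (simp add: ssum_single)
qed

lemma tau_mono: "tau (monom lam W) = monom lam (tau W)"
  by (induct lam) (simp_all add: tau_mult tau_pc)

lemma pc_mono: "k > 0 \<Longrightarrow> pc k (monom lam W) = monom lam (pc k W)"
  by (induct lam) (simp_all add: pc_mult pc_pc pc_1 mult.commute)

lemma ordn_tau1: "ordn W 1 \<Longrightarrow> ordn (tau W) 1" by (rule ordn_tau)

lemma tau_pleth: assumes W: "ordn W 1" shows "tau (pleth g W) = pleth g (tau W)"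
  unfolding pleth_ssum[OF W] pleth_ssum[OF ordn_tau[OF W]] ssum_tau
  by (simp add: tau_mult tau_mono)

lemma pc_pleth: assumes W: "ordn W 1" and k: "k > 0" shows "pc k (pleth g W) = pleth g (pc k W)"
proof -
  have W': "ordn (pc k W) 1" using ordn_mono[OF ordn_pc[OF k W], of 1] k by simp
  show ?thesis
    unfolding pleth_ssum[OF W] pleth_ssum[OF W'] ssum_pc[OF lf_mono_family[OF W] k]
    by (simp add: pc_mult pc_mono pc_cst k)
qed


lemma lf_finsupp: assumes "finite A" "\<And>i. i \<notin> A \<Longrightarrow> F i = 0" shows "lf F"
  unfolding lf_def
proof
  fix n
  have "{i. \<exists>m. sf_wt m \<le> n \<and> coeff (F i) m \<noteq> 0} \<subseteq> A"
  proof
    fix i assume "i \<in> {i. \<exists>m. sf_wt m \<le> n \<and> coeff (F i) m \<noteq> 0}"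
    then obtain m where "coeff (F i) m \<noteq> 0" by auto
    then show "i \<in> A" using assms(2)[of i] by (cases "i \<in> A") auto
  qed
  then show "finite {i. \<exists>m. sf_wt m \<le> n \<and> coeff (F i) m \<noteq> 0}" using assms(1) by (rule finite_subset)
qed

lemma ssum_mult_left_fin: assumes "finite A" "\<And>i. i \<notin> A \<Longrightarrow> F i = 0" shows "g * ssum F = ssum (\<lambda>i. g * F i)"
  by (rule ssum_mult_left[OF lf_finsupp[OF assms]])

definition Tm :: "ps \<Rightarrow> nat multiset \<Rightarrow> nat \<Rightarrow> ps" where
  "Tm W lam j = of_nat (count lam j * Suc j) * (pc (Suc j) (delta W) * monom (lam - {#j#}) W)"

lemma Tm_zero: "j \<notin># lam \<Longrightarrow> Tm W lam j = 0"
  by (simp add: Tm_def not_in_iff)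

lemma monom_diff: "j \<in># lam \<Longrightarrow> monom (add_mset x lam - {#j#}) W = pc (Suc x) W * monom (lam - {#j#}) W"
proof -
  assume j: "j \<in># lam"
  have "add_mset x lam - {#j#} = add_mset x (lam - {#j#})"
    using diff_union_single_conv[OF j, of "{#x#}"] by simp
  then show ?thesis by simp
qed

lemma monom_remove: "j \<in># lam \<Longrightarrow> pc (Suc j) W * monom (lam - {#j#}) W = monom lam W"
proof -
  assume j: "j \<in># lam"
  have "monom (add_mset j (lam - {#j#})) W = monom lam W" using insert_DiffM[OF j] by simp
  then show ?thesis by simp
qed

lemma Tm_add: "Tm W (add_mset x lam) j = pc (Suc x) W * Tm W lam j +
   (if j = x then of_nat (Suc x) * (pc (Suc x) (delta W) * monom lam W) else 0)"
proof (cases "j \<in># lam")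
  case True
  show ?thesis
  proof (cases "j = x")
    case False
    have "Tm W (add_mset x lam) j = of_nat (count lam j * Suc j) * (pc (Suc j) (delta W) * (pc (Suc x) W * monom (lam - {#j#}) W))"
      unfolding Tm_def monom_diff[OF True] using False by simp
    also have "\<dots> = pc (Suc x) W * Tm W lam j" unfolding Tm_def by (simp only: ac_simps)
    finally show ?thesis using False by simp
  next
    case jx: True
    have e: "pc (Suc x) W * monom (lam - {#x#}) W = monom lam W"
      using True jx monom_remove by blast
    have "Tm W (add_mset x lam) j = of_nat (Suc (count lam x) * Suc x) * (pc (Suc x) (delta W) * monom lam W)"
      unfolding Tm_def jx by simp
    also have "\<dots> = of_nat (count lam x * Suc x) * (pc (Suc x) (delta W) * (pc (Suc x) W * monom (lam - {#x#}) W))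
       + of_nat (Suc x) * (pc (Suc x) (delta W) * monom lam W)"
      unfolding e by (simp only: of_nat_add of_nat_mult mult_Suc distrib_right add.commute)
    also have "\<dots> = pc (Suc x) W * Tm W lam j + of_nat (Suc x) * (pc (Suc x) (delta W) * monom lam W)"
      unfolding Tm_def jx by (simp only: ac_simps)
    finally show ?thesis using jx by simp
  qed
next
  case False
  then have c: "count lam j = 0" by (simp add: not_in_iff)
  show ?thesis
  proof (cases "j = x")
    case True
    then show ?thesis using c by (simp add: Tm_def)
  next
    case False
    then show ?thesis using c by (simp add: Tm_def)
  qed
qed

lemma delta_monom: "delta (monom lam W) = ssum (Tm W lam)"
proof (induct lam)
  case empty
  show ?case by (simp add: ssum_zero Tm_def)
next
  case (add x lam)
  have lfT: "lf (Tm W lam)" by (rule lf_finsupp[of "set_mset lam"]) (auto simp: Tm_zero)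
  have lf2: "lf (\<lambda>j. if j = x then of_nat (Suc x) * (pc (Suc x) (delta W) * monom lam W) else 0)"
    by (rule lf_finsupp[of "{x}"]) auto
  have "delta (monom (add_mset x lam) W) = delta (pc (Suc x) W) * monom lam W + pc (Suc x) W * ssum (Tm W lam)"
    by (simp add: delta_mult add)
  also have "\<dots> = ssum (\<lambda>j. pc (Suc x) W * Tm W lam j +
     (if j = x then of_nat (Suc x) * (pc (Suc x) (delta W) * monom lam W) else 0))"
    by (subst ssum_add[OF lf_mult_left[OF lfT] lf2])
       (simp add: ssum_single ssum_mult_left[OF lfT] delta_pc algebra_simps)
  also have "\<dots> = ssum (Tm W (add_mset x lam))" by (rule ssum_cong) (simp add: Tm_add)
  finally show ?case .
qed

lemma sf_z_pos: "sf_z m > 0" by (simp add: sf_z_def)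

lemma sf_z_add: "sf_z (add_mset j mu) = sf_z mu * Suc j * Suc (count mu j)"
proof (cases "j \<in># mu")
  case True
  have f: "finite (set_mset mu)" by simp
  have "sf_z (add_mset j mu) = (Suc j ^ Suc (count mu j) * fact (Suc (count mu j))) *
      (\<Prod>i\<in>set_mset mu - {j}. Suc i ^ count mu i * fact (count mu i))"
    unfolding sf_z_def using True by (simp add: prod.remove[OF f True] insert_absorb)
  moreover have "sf_z mu = (Suc j ^ count mu j * fact (count mu j)) *
      (\<Prod>i\<in>set_mset mu - {j}. Suc i ^ count mu i * fact (count mu i))"
    unfolding sf_z_def by (simp add: prod.remove[OF f True])
  ultimately show ?thesis by (simp add: algebra_simps)
next
  case False
  then have c: "count mu j = 0" by (simp add: count_eq_zero_iff)
  have "sf_z (add_mset j mu) = Suc j * (\<Prod>i\<in>set_mset mu. Suc i ^ count (add_mset j mu) i * fact (count (add_mset j mu) i))"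
    unfolding sf_z_def using False c by simp
  also have "(\<Prod>i\<in>set_mset mu. Suc i ^ count (add_mset j mu) i * fact (count (add_mset j mu) i)) = sf_z mu"
    unfolding sf_z_def by (rule prod.cong) (use False in auto)
  finally show ?thesis using c by simp
qed

definition E0 :: sf where "E0 lam = 1 / of_nat (sf_z lam)"

lemma E0_add: "E0 (add_mset j mu) * of_nat (Suc (count mu j) * Suc j) = E0 mu"
proof -
  have nz: "(of_nat (sf_z mu) :: rat) \<noteq> 0" "(of_nat (Suc j) :: rat) \<noteq> 0" "(of_nat (Suc (count mu j)) :: rat) \<noteq> 0"
    using sf_z_pos[of mu] by simp_all
  show ?thesis unfolding E0_def sf_z_add of_nat_mult using nz
    by (simp add: field_simps del: of_nat_Suc)
qed

lemma geom: assumes u: "ordn u 1" shows "(1 + u) * ssum (\<lambda>n. (- u) ^ n) = 1"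
proof -
  have lfG: "lf (\<lambda>n. (- u) ^ n)"
    by (rule lf_ordI[of _ id]) (auto intro: ordn_power ordn_neg u)
  have "ssum (\<lambda>n. (- u) ^ n) = 1 + ssum (\<lambda>n. (- u) * (- u) ^ n)"
    by (subst ssum_shift[OF lfG]) simp
  also have "\<dots> = 1 + (- u) * ssum (\<lambda>n. (- u) ^ n)"
    by (simp only: ssum_mult_left[OF lfG])
  also have "\<dots> = 1 - u * ssum (\<lambda>n. (- u) ^ n)" by simp
  finally show ?thesis by (simp add: algebra_simps)
qed


definition SW :: "ps \<Rightarrow> ps" where "SW W = ssum (\<lambda>j. pc (Suc j) (delta W))"

lemma ordn_delta1: "ordn W 1 \<Longrightarrow> ordn (delta W) 1" by (rule ordn_delta)

lemma ordn_pcSuc: assumes "ordn W 1" shows "ordn (pc (Suc j) W) (Suc j)"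
  using ordn_pc1[OF _ assms, of "Suc j"] by simp

lemma finite_Suc_le: "finite {i. Suc i \<le> n}"
  by (rule finite_subset[of _ "{..<n}"]) auto

lemma ordn_of_nat_mult: "ordn f n \<Longrightarrow> ordn (of_nat c * f) n"
  using ordn_cst_mult[of f n "of_nat c"] by (simp add: cst_of_nat)

lemma lf_S: assumes W: "ordn W 1" shows "lf (\<lambda>j. pc (Suc j) (delta W))"
  by (rule lf_ordI[of _ Suc]) (auto intro: ordn_pcSuc ordn_delta W finite_Suc_le)

lemma finite_pairs: "finite {p :: nat multiset \<times> nat. max (sf_wt (fst p)) (Suc (snd p)) \<le> n}"
  by (rule finite_subset[OF _ finite_cartesian_product[OF finite_wt_le[of n] finite_lessThan[of n]]]) auto

lemma ordn_Tm: assumes W: "ordn W 1" shows "ordn (Tm W lam j) (max (sf_wt lam) (Suc j))"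
proof (cases "j \<in># lam")
  case True
  have le: "Suc j \<le> sf_wt lam" using elem_lt_wt[OF True] by simp
  have wt: "sf_wt lam = Suc j + sf_wt (lam - {#j#})"
    using sf_wt_add_mset[of j "lam - {#j#}"] insert_DiffM[OF True] by simp
  have "ordn (pc (Suc j) (delta W) * monom (lam - {#j#}) W) (Suc j + sf_wt (lam - {#j#}))"
    by (rule ordn_mult[OF ordn_pcSuc[OF ordn_delta[OF W]] ordn_monom[OF W]])
  then have "ordn (Tm W lam j) (sf_wt lam)"
    unfolding Tm_def wt by (rule ordn_of_nat_mult)
  then show ?thesis using le by (simp add: max_def)
next
  case False then show ?thesis by (simp add: Tm_zero)
qed

lemma exp_lemma: assumes W: "ordn W 1" shows "delta (pleth E0 W) = pleth E0 W * SW W"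
proof -
  let ?A = "\<lambda>(lam, j). cst (E0 lam) * Tm W lam j"
  let ?B = "\<lambda>(mu, j). cst (E0 mu) * monom mu W * pc (Suc j) (delta W)"
  have lfA: "lf ?A"
  proof (rule lf_ordI[of _ "\<lambda>p. max (sf_wt (fst p)) (Suc (snd p))"])
    fix p :: "nat multiset \<times> nat"
    obtain mu j where p: "p = (mu, j)" by (cases p)
    show "ordn (?A p) (max (sf_wt (fst p)) (Suc (snd p)))"
      unfolding p using ordn_cst_mult[OF ordn_Tm[OF W]] by simp
  qed (rule finite_pairs)
  have lfB: "lf ?B"
  proof (rule lf_ordI[of _ "\<lambda>p. max (sf_wt (fst p)) (Suc (snd p))"])
    fix p :: "nat multiset \<times> nat"
    obtain mu j where p: "p = (mu, j)" by (cases p)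
    have "ordn (cst (E0 mu) * monom mu W * pc (Suc j) (delta W)) (sf_wt mu + Suc j)"
      by (rule ordn_mult[OF ordn_cst_mult[OF ordn_monom[OF W]] ordn_pcSuc[OF ordn_delta[OF W]]])
    then show "ordn (?B p) (max (sf_wt (fst p)) (Suc (snd p)))"
      unfolding p by (auto elim: ordn_mono)
  qed (rule finite_pairs)
  have "delta (pleth E0 W) = ssum (\<lambda>lam. cst (E0 lam) * ssum (Tm W lam))"
    unfolding pleth_ssum[OF W] ssum_delta by (simp add: delta_cst_mult delta_monom)
  also have "\<dots> = ssum (\<lambda>lam. ssum (\<lambda>j. cst (E0 lam) * Tm W lam j))"
    by (simp add: ssum_cst_mult)
  also have "\<dots> = ssum ?A"
    using ssum_pair[of "\<lambda>lam j. cst (E0 lam) * Tm W lam j"] lfA by simp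
  also have "\<dots> = ssum (\<lambda>p. ?A ((\<lambda>(mu, j). (add_mset j mu, j)) p))"
  proof (rule ssum_reindex_inj)
    show "inj (\<lambda>(mu, j). (add_mset j mu, j))" by (auto simp: inj_def)
    fix q assume q: "q \<notin> range (\<lambda>(mu::nat multiset, j::nat). (add_mset j mu, j))"
    obtain lam j where qq: "q = (lam, j)" by (cases q)
    have "j \<notin># lam"
    proof
      assume "j \<in># lam"
      then have "q = (\<lambda>(mu, j). (add_mset j mu, j)) (lam - {#j#}, j)" using qq by simp
      then show False using q by blast
    qed
    then show "?A q = 0" using qq by (simp add: Tm_zero)
  qed
  also have "\<dots> = ssum ?B"
  proof (rule ssum_cong)
    fix p :: "nat multiset \<times> nat"
    obtain mu j where p: "p = (mu, j)" by (cases p)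
    have "cst (E0 (add_mset j mu)) * Tm W (add_mset j mu) j
        = cst (E0 (add_mset j mu) * of_nat (Suc (count mu j) * Suc j)) * (pc (Suc j) (delta W) * monom mu W)"
      unfolding Tm_def cst_mult cst_of_nat by (simp add: mult.assoc)
    also have "\<dots> = ?B p" unfolding E0_add p by (simp add: ac_simps)
    finally show "?A ((\<lambda>(mu, j). (add_mset j mu, j)) p) = ?B p" using p by simp
  qed
  also have "\<dots> = ssum (\<lambda>mu. ssum (\<lambda>j. cst (E0 mu) * monom mu W * pc (Suc j) (delta W)))"
    using ssum_pair[of "\<lambda>mu j. cst (E0 mu) * monom mu W * pc (Suc j) (delta W)"] lfB by simp
  also have "\<dots> = ssum (\<lambda>mu. cst (E0 mu) * monom mu W * SW W)"
    unfolding SW_def by (rule ssum_cong) (simp add: ssum_mult_left[OF lf_S[OF W]])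
  also have "\<dots> = pleth E0 W * SW W"
    unfolding pleth_ssum[OF W] by (simp add: ssum_mult_right[OF lf_mono_family[OF W]])
  finally show ?thesis .
qed

lemma pleth_const1: assumes W: "ordn W 1" shows "pleth (sf_const 1) W = 1"
proof -
  have "pleth (sf_const 1) W = ssum (\<lambda>lam. if lam = ({#}::nat multiset) then 1 else 0)"
    unfolding pleth_ssum[OF W] by (rule ssum_cong) (simp add: sf_const_def)
  then show ?thesis by (simp add: ssum_single)
qed

lemma E0_eq: "E0 = sf_add Comm (sf_const 1)"
  by (auto simp: fun_eq_iff E0_def sf_add_def Comm_def sf_const_def sf_z_def)

lemma pleth_E0: assumes W: "ordn W 1" shows "pleth E0 W = 1 + pleth Comm W"
  unfolding E0_eq pleth_add pleth_const1[OF W] by simp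

lemma exp_comm: assumes W: "ordn W 1" shows "delta (pleth Comm W) = (1 + pleth Comm W) * SW W"
  using exp_lemma[OF W] unfolding pleth_E0[OF W] by simp

lemma SW_neg: assumes W: "ordn W 1" shows "SW (- W) = - SW W"
  unfolding SW_def by (simp add: pc_neg ssum_neg)

lemma coeff_Comm_empty: "coeff (pleth Comm W) {#} = 0"
  by (simp add: coeff_pleth_empty Comm_def)

lemma exp_inverse: assumes W: "ordn W 1" shows "(1 + pleth Comm W) * (1 + pleth Comm (- W)) = 1"
proof (rule delta_eqI)
  have W': "ordn (- W) 1" using ordn_neg[OF W] .
  show "delta ((1 + pleth Comm W) * (1 + pleth Comm (- W))) = delta 1"
    by (simp add: delta_mult exp_comm[OF W] exp_comm[OF W'] SW_neg[OF W] algebra_simps)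
  show "coeff ((1 + pleth Comm W) * (1 + pleth Comm (- W))) {#} = coeff 1 {#}"
    by (simp add: coeff_mult_empty coeff_Comm_empty coeff_1)
qed



lemma moebius_1: "moebius 1 = 1"
  by (simp add: moebius_def)

lemma moebius_mult_prime:
  fixes p d :: nat
  assumes p: "prime p" and nd: "\<not> p dvd d" and d: "d > 0"
  shows "moebius (p * d) = - moebius d"
proof (cases "squarefree d")
  case True
  have cop: "coprime p d" using p nd by (simp add: prime_imp_coprime)
  have sq: "squarefree (p * d)" by (rule squarefree_mult_coprime[OF cop squarefree_prime[OF p] True])
  have pf: "prime_factors (p * d) = insert p (prime_factors d)"
    using p d by (simp add: prime_factors_product prime_prime_factors prime_gt_0_nat)
  have "p \<notin> prime_factors d" using nd by auto
  then have "card (prime_factors (p * d)) = Suc (card (prime_factors d))"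
    unfolding pf by simp
  then show ?thesis using sq True p d by (simp add: moebius_def prime_gt_0_nat)
next
  case False
  then have "\<not> squarefree (p * d)" using squarefree_multD(2) by blast
  then show ?thesis using False by (simp add: moebius_def)
qed

lemma moebius_sum:
  fixes n :: nat assumes n: "n > 0"
  shows "(\<Sum>d\<in>{d. d dvd n}. moebius d) = (if n = 1 then 1 else 0)"
proof (cases "n = 1")
  case True
  then have "{d. d dvd n} = {1}" by auto
  then show ?thesis using True moebius_1 by simp
next
  case False
  obtain p where p: "prime p" "p dvd n" using prime_factor_nat[OF False] by blast
  define D1 where "D1 = {d. d dvd n \<and> \<not> p dvd d}"
  define D2 where "D2 = {d. d dvd n \<and> p dvd d}"
  have fin: "finite {d. d dvd n}" using n by simp
  have fin1: "finite D1" "finite D2" unfolding D1_def D2_def by (auto intro: finite_subset[OF _ fin])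
  have split: "{d. d dvd n} = D1 \<union> D2" "D1 \<inter> D2 = {}" unfolding D1_def D2_def by auto
  have img: "(\<lambda>d. p * d) ` D1 \<subseteq> D2"
  proof
    fix x assume "x \<in> (\<lambda>d. p * d) ` D1"
    then obtain d where d: "d \<in> D1" "x = p * d" by auto
    have "coprime p d" using p(1) d(1) by (simp add: D1_def prime_imp_coprime)
    then have "p * d dvd n" using d(1) p(2) by (simp add: D1_def divides_mult)
    then show "x \<in> D2" using d by (simp add: D2_def)
  qed
  have zero: "moebius x = 0" if "x \<in> D2 - (\<lambda>d. p * d) ` D1" for x
  proof -
    from that obtain e where e: "x = p * e" "x dvd n" by (auto simp: D2_def)
    have "p dvd e"
    proof (rule ccontr)
      assume "\<not> p dvd e"
      then have "e \<in> D1" using e by (auto simp: D1_def intro: dvd_mult_right)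
      then show False using that e by auto
    qed
    then have pp: "p * p dvd x" unfolding e(1) by (rule mult_dvd_mono[OF dvd_refl])
    have "\<not> is_unit p" using prime_gt_1_nat[OF p(1)] by simp
    have "\<not> squarefree x"
    proof
      assume "squarefree x"
      then have "\<forall>y. y * y dvd x \<longrightarrow> is_unit y" by (simp add: squarefree_def power2_eq_square)
      then have "is_unit p" using pp by blast
      then show False using \<open>\<not> is_unit p\<close> by blast
    qed
    then show ?thesis by (simp add: moebius_def)
  qed
  have "(\<Sum>d\<in>D2. moebius d) = (\<Sum>d\<in>(\<lambda>d. p * d) ` D1. moebius d)"
    by (rule sum.mono_neutral_right[OF fin1(2) img]) (use zero in blast)
  also have "\<dots> = (\<Sum>d\<in>D1. moebius (p * d))"
    by (rule sum.reindex[unfolded o_def]) (use p(1) in \<open>auto simp: inj_on_def prime_gt_0_nat\<close>)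
  also have "\<dots> = (\<Sum>d\<in>D1. - moebius d)"
    by (rule sum.cong[OF refl], rule moebius_mult_prime[OF p(1)]) (use n in \<open>auto simp: D1_def intro: Nat.gr0I\<close>)
  finally have "(\<Sum>d\<in>D2. moebius d) = - (\<Sum>d\<in>D1. moebius d)" by (simp add: sum_negf)
  then show ?thesis unfolding split(1) using sum.union_disjoint[OF fin1 split(2), of moebius] False by simp
qed


lemma monom_replicate: "monom (replicate_mset n k) W = (pc (Suc k) W) ^ n"
  by (induct n) simp_all

lemma cst_power: "cst (a ^ n) = cst a ^ n"
  by (induct n) (simp_all add: cst_mult)

lemma ordn_power_gen: "ordn f a \<Longrightarrow> ordn (f ^ n) (n * a)"
  by (induct n) (auto dest: ordn_mult[of f a])

lemma set_single_replicate: "set_mset lam = {j} \<Longrightarrow> lam = replicate_mset (count lam j) j"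
proof (rule multiset_eqI)
  fix i assume s: "set_mset lam = {j}"
  show "count lam i = count (replicate_mset (count lam j) j) i"
  proof (cases "i = j")
    case False
    then have "i \<notin># lam" using s by auto
    then show ?thesis using False by (simp add: not_in_iff)
  qed simp
qed

definition cL :: "nat \<Rightarrow> nat \<Rightarrow> rat" where
  "cL k n = (-1) ^ n * of_int (moebius (Suc k)) / (of_nat (Suc k) * of_nat (Suc n))"

lemma susp_Lie_rep: "sf_susp Lie (replicate_mset (Suc n) k) = cL k n"
proof -
  have "set_mset (replicate_mset (Suc n) k) = {k}" by simp
  then show ?thesis by (simp add: sf_susp_def Lie_def cL_def)
qed

lemma susp_Lie_zero: assumes "lam \<notin> range (\<lambda>(k, n). replicate_mset (Suc n) k)"
  shows "sf_susp Lie lam = 0"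
proof (rule ccontr)
  assume "sf_susp Lie lam \<noteq> 0"
  then have "Lie lam \<noteq> 0" by (simp add: sf_susp_def)
  then obtain j where ne: "lam \<noteq> {#}" and s: "set_mset lam = {j}" by (auto simp: Lie_def split: if_splits)
  have "count lam j > 0" using s by auto
  then have c: "Suc (count lam j - 1) = count lam j" by simp
  have "lam = replicate_mset (Suc (count lam j - 1)) j" unfolding c by (rule set_single_replicate[OF s])
  then have "lam = (\<lambda>(k, n). replicate_mset (Suc n) k) (j, count lam j - 1)" by (simp only: prod.case)
  then show False using assms by blast
qed

lemma pleth_susp_Lie: assumes Y: "ordn Y 1"
  shows "pleth (sf_susp Lie) Y = ssum (\<lambda>(k, n). cst (cL k n) * (pc (Suc k) Y) ^ Suc n)"
proof -
  let ?h = "\<lambda>(k::nat, n::nat). replicate_mset (Suc n) k"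
  have inj: "inj ?h"
  proof (rule injI)
    fix p q :: "nat \<times> nat" assume e: "?h p = ?h q"
    obtain k n where p: "p = (k, n)" by (cases p)
    obtain k' n' where q: "q = (k', n')" by (cases q)
    have e': "replicate_mset (Suc n) k = replicate_mset (Suc n') k'" using e p q by simp
    then have "size (replicate_mset (Suc n) k) = size (replicate_mset (Suc n') k')" by (rule arg_cong)
    then have "n = n'" by simp
    moreover have "k \<in># replicate_mset (Suc n') k'" using e' by (metis in_replicate_mset zero_less_Suc)
    then have "k = k'" by (simp split: if_splits)
    ultimately show "p = q" using p q by simp
  qed
  have z: "\<And>lam. lam \<notin> range ?h \<Longrightarrow> cst (sf_susp Lie lam) * monom lam Y = 0"
    using susp_Lie_zero by simp
  have "pleth (sf_susp Lie) Y = ssum (\<lambda>p. cst (sf_susp Lie (?h p)) * monom (?h p) Y)"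
    unfolding pleth_ssum[OF Y] by (rule ssum_reindex_inj[OF inj z])
  also have "\<dots> = ssum (\<lambda>(k, n). cst (cL k n) * (pc (Suc k) Y) ^ Suc n)"
  proof (rule ssum_cong)
    fix p :: "nat \<times> nat"
    obtain k n where p: "p = (k, n)" by (cases p)
    show "cst (sf_susp Lie (?h p)) * monom (?h p) Y = (\<lambda>(k, n). cst (cL k n) * (pc (Suc k) Y) ^ Suc n) p"
      unfolding p prod.case susp_Lie_rep monom_replicate ..
  qed
  finally show ?thesis .
qed

lemma finite_prod_le: "finite {p :: nat \<times> nat. Suc (fst p) * Suc (snd p) \<le> N}"
proof (rule finite_subset[OF _ finite_cartesian_product[OF finite_lessThan[of N] finite_lessThan[of N]]])
  show "{p :: nat \<times> nat. Suc (fst p) * Suc (snd p) \<le> N} \<subseteq> {..<N} \<times> {..<N}"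
  proof
    fix p :: "nat \<times> nat" assume "p \<in> {p. Suc (fst p) * Suc (snd p) \<le> N}"
    then have h: "Suc (fst p) * Suc (snd p) \<le> N" by simp
    have "Suc (fst p) \<le> Suc (fst p) * Suc (snd p)" "Suc (snd p) \<le> Suc (fst p) * Suc (snd p)" by simp_all
    then show "p \<in> {..<N} \<times> {..<N}" using h by (cases p) auto
  qed
qed

lemma finite_max_le: "finite {p :: nat \<times> nat. max (Suc (fst p)) (Suc (snd p)) \<le> N}"
  by (rule finite_subset[OF _ finite_cartesian_product[OF finite_lessThan[of N] finite_lessThan[of N]]]) auto

lemma mob_rat: "(\<Sum>k\<in>{..n}. if Suc k dvd Suc n then (of_int (moebius (Suc k)) :: rat) else 0) = (if n = 0 then 1 else 0)"
proof -
  have "{d. d dvd Suc n} = Suc ` {k \<in> {..n}. Suc k dvd Suc n}"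
  proof
    show "{d. d dvd Suc n} \<subseteq> Suc ` {k \<in> {..n}. Suc k dvd Suc n}"
    proof
      fix d assume "d \<in> {d. d dvd Suc n}"
      then have d: "d dvd Suc n" by simp
      then have "d > 0" "d \<le> Suc n" using dvd_imp_le by (auto intro: Nat.gr0I)
      then show "d \<in> Suc ` {k \<in> {..n}. Suc k dvd Suc n}" using d
        by (intro image_eqI[of _ _ "d - 1"]) auto
    qed
  qed auto
  then have "(\<Sum>d\<in>{d. d dvd Suc n}. moebius d) = (\<Sum>k\<in>{k \<in> {..n}. Suc k dvd Suc n}. moebius (Suc k))"
    by (simp add: sum.reindex)
  also have "\<dots> = (\<Sum>k\<in>{..n}. if Suc k dvd Suc n then moebius (Suc k) else 0)"
    by (rule sum.inter_filter) simp
  finally have "(\<Sum>k\<in>{..n}. if Suc k dvd Suc n then moebius (Suc k) else 0) = (if n = 0 then 1 else 0)"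
    using moebius_sum[of "Suc n"] by simp
  moreover have "(\<Sum>k\<in>{..n}. if Suc k dvd Suc n then (of_int (moebius (Suc k)) :: rat) else 0)
      = of_int (\<Sum>k\<in>{..n}. if Suc k dvd Suc n then moebius (Suc k) else 0)"
    unfolding of_int_sum by (rule sum.cong) auto
  ultimately show ?thesis by simp
qed


lemma Lie_Comm: assumes X: "ordn X 1" shows "pleth (sf_susp Lie) (pleth Comm X) = X"
proof -
  define C where "C = pleth Comm X"
  have C1: "ordn C 1" unfolding ordn_1 C_def by (rule coeff_Comm_empty)
  define u where "u k = pc (Suc k) C" for k
  have uk: "ordn (u k) (Suc k)" for k unfolding u_def by (rule ordn_pcSuc[OF C1])
  have u1: "ordn (u k) 1" for k using ordn_mono[OF uk[of k]] by simp
  have dX: "ordn (delta X) 1" by (rule ordn_delta[OF X])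
  define mk where "mk k = (of_int (moebius (Suc k)) / of_nat (Suc k) :: rat)" for k
  define Q where "Q k = ssum (\<lambda>j. pc (Suc k * Suc j) (delta X))" for k
  have du: "delta (u k) = of_nat (Suc k) * ((1 + u k) * Q k)" for k
  proof -
    have "pc (Suc k) (SW X) = Q k"
      unfolding SW_def Q_def ssum_pc[OF lf_S[OF X] zero_less_Suc] by (simp add: pc_pc)
    then show ?thesis
      unfolding u_def delta_pc[OF zero_less_Suc] C_def exp_comm[OF X]
      by (simp add: pc_mult pc_add pc_1)
  qed
  have lfG: "lf (\<lambda>n. (- u k) ^ n)" for k
    by (rule lf_ordI[of _ id]) (auto intro: ordn_power ordn_neg u1)
  have geomk: "ssum (\<lambda>n. (- u k) ^ n) * delta (u k) = of_nat (Suc k) * Q k" for k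
  proof -
    have "ssum (\<lambda>n. (- u k) ^ n) * delta (u k) = of_nat (Suc k) * (((1 + u k) * ssum (\<lambda>n. (- u k) ^ n)) * Q k)"
      unfolding du by (simp only: ac_simps)
    then show ?thesis unfolding geom[OF u1] by simp
  qed
  have lfP: "lf (\<lambda>(k, n). cst (mk k) * ((- u k) ^ n * delta (u k)))"
  proof (rule lf_ordI[of _ "\<lambda>p. Suc (fst p) * Suc (snd p)"])
    fix p :: "nat \<times> nat"
    obtain k n where p: "p = (k, n)" by (cases p)
    have "ordn ((- u k) ^ n * delta (u k)) (n * Suc k + Suc k)"
      by (rule ordn_mult[OF ordn_power_gen[OF ordn_neg[OF uk]] ordn_delta[OF uk]])
    then show "ordn ((\<lambda>(k, n). cst (mk k) * ((- u k) ^ n * delta (u k))) p) (Suc (fst p) * Suc (snd p))"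
      unfolding p by (auto intro: ordn_cst_mult simp: algebra_simps)
  qed (rule finite_prod_le)
  have lfR: "lf (\<lambda>(k, j). cst (of_int (moebius (Suc k))) * pc (Suc k * Suc j) (delta X))"
  proof (rule lf_ordI[of _ "\<lambda>p. Suc (fst p) * Suc (snd p)"])
    fix p :: "nat \<times> nat"
    obtain k j where p: "p = (k, j)" by (cases p)
    have "ordn (pc (Suc k * Suc j) (delta X)) (Suc k * Suc j)" by (rule ordn_pc1[OF _ dX]) simp
    then show "ordn ((\<lambda>(k, j). cst (of_int (moebius (Suc k))) * pc (Suc k * Suc j) (delta X)) p) (Suc (fst p) * Suc (snd p))"
      unfolding p by (auto intro: ordn_cst_mult)
  qed (rule finite_prod_le)
  define V where "V p = (if Suc (snd p) dvd Suc (fst p) then cst (of_int (moebius (Suc (snd p)))) * pc (Suc (fst p)) (delta X) else 0)" for p :: "nat \<times> nat"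
  have lfV: "lf V"
  proof (rule lf_ordI[of _ "\<lambda>p. max (Suc (fst p)) (Suc (snd p))"])
    fix p :: "nat \<times> nat"
    show "ordn (V p) (max (Suc (fst p)) (Suc (snd p)))"
    proof (cases "Suc (snd p) dvd Suc (fst p)")
      case True
      then have "Suc (snd p) \<le> Suc (fst p)" by (rule dvd_imp_le) simp
      then have m: "max (Suc (fst p)) (Suc (snd p)) = Suc (fst p)" by (rule max_absorb1)
      have o: "ordn (pc (Suc (fst p)) (delta X)) (Suc (fst p))" by (rule ordn_pc1[OF _ dX]) simp
      have "V p = cst (of_int (moebius (Suc (snd p)))) * pc (Suc (fst p)) (delta X)" using True by (simp add: V_def)
      then show ?thesis unfolding m using ordn_cst_mult[OF o] by simp
    qed (simp add: V_def)
  qed (rule finite_max_le)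
  define g where "g p = (Suc (fst p) * Suc (snd p) - 1, fst p)" for p :: "nat \<times> nat"
  have injg: "inj g"
  proof (rule injI)
    fix p q assume "g p = g q"
    then have "(Suc (fst p) * Suc (snd p) - 1, fst p) = (Suc (fst q) * Suc (snd q) - 1, fst q)" unfolding g_def .
    then have "Suc (fst p) * Suc (snd p) - 1 = Suc (fst q) * Suc (snd q) - 1 \<and> fst p = fst q" by (rule prod.inject[THEN iffD1])
    then have "fst p = fst q" "Suc (fst p) * Suc (snd p) - 1 = Suc (fst q) * Suc (snd q) - 1" by blast+
    moreover have "Suc (fst p) * Suc (snd p) \<ge> 1" "Suc (fst q) * Suc (snd q) \<ge> 1" by simp_all
    ultimately have e: "fst p = fst q" "Suc (fst p) * Suc (snd p) = Suc (fst p) * Suc (snd q)"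
      by (metis One_nat_def Suc_pred less_eq_Suc_le)+
    then have "Suc (snd p) = Suc (snd q)" by (simp only: mult_left_cancel nat.distinct(1) not_False_eq_True)
    then show "p = q" using e(1) by (simp add: prod_eq_iff)
  qed
  have Vz: "V q = 0" if "q \<notin> range g" for q
  proof (rule ccontr)
    assume "V q \<noteq> 0"
    then have d: "Suc (snd q) dvd Suc (fst q)" by (auto simp: V_def split: if_splits)
    then obtain r where r: "Suc (fst q) = Suc (snd q) * r" by (auto elim: dvdE)
    then have "r > 0" by (auto intro: Nat.gr0I)
    then have "Suc (r - 1) = r" by simp
    then have "g (snd q, r - 1) = q" using r by (simp add: g_def prod_eq_iff)
    then show False using that by (metis rangeI)
  qed
  have Vg: "V (g p) = (\<lambda>(k, j). cst (of_int (moebius (Suc k))) * pc (Suc k * Suc j) (delta X)) p" for p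
  proof -
    obtain k j where p: "p = (k, j)" by (cases p)
    have e: "Suc (Suc k * Suc j - 1) = Suc k * Suc j" by simp
    have "V (g p) = V (Suc k * Suc j - 1, k)" by (simp add: g_def p)
    also have "\<dots> = cst (of_int (moebius (Suc k))) * pc (Suc k * Suc j) (delta X)"
      unfolding V_def fst_conv snd_conv e using dvd_triv_left[of "Suc k" "Suc j"] by (rule if_P)
    finally show ?thesis by (simp add: p)
  qed
  have Vrow: "ssum (\<lambda>k. V (n, k)) = (if n = 0 then delta X else 0)" for n
  proof -
    have "ssum (\<lambda>k. V (n, k)) = (\<Sum>k\<in>{..n}. V (n, k))"
    proof (rule ssum_finite)
      fix k assume "k \<notin> {..n}"
      then have "\<not> Suc k dvd Suc n" by (auto dest: dvd_imp_le)
      then show "V (n, k) = 0" by (simp add: V_def)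
    qed simp
    also have "\<dots> = cst (\<Sum>k\<in>{..n}. if Suc k dvd Suc n then (of_int (moebius (Suc k)) :: rat) else 0) * pc (Suc n) (delta X)"
    proof -
      have "cst (\<Sum>k\<in>A. if Suc k dvd Suc n then (of_int (moebius (Suc k)) :: rat) else 0) * pc (Suc n) (delta X) = (\<Sum>k\<in>A. V (n, k))" if "finite A" for A
        using that by (induct A rule: finite_induct) (simp_all add: V_def cst_add distrib_right)
      then show ?thesis by simp
    qed
    also have "\<dots> = (if n = 0 then delta X else 0)" unfolding mob_rat by simp
    finally show ?thesis .
  qed
  have "delta (pleth (sf_susp Lie) C) = ssum (\<lambda>p. delta ((\<lambda>(k, n). cst (cL k n) * u k ^ Suc n) p))"
    unfolding pleth_susp_Lie[OF C1] ssum_delta u_def ..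
  also have "\<dots> = ssum (\<lambda>(k, n). cst (mk k) * ((- u k) ^ n * delta (u k)))"
  proof (rule ssum_cong)
    fix p :: "nat \<times> nat"
    obtain k n where p: "p = (k, n)" by (cases p)
    have r: "cL k n * of_nat (Suc n) = (-1) ^ n * mk k"
      by (simp add: cL_def mk_def field_simps del: of_nat_Suc)
    have "cst (cL k n) * delta (u k ^ Suc n) = cst (cL k n * of_nat (Suc n)) * (u k ^ n * delta (u k))"
      unfolding delta_power cst_mult cst_of_nat by (simp only: ac_simps)
    also have "\<dots> = cst (mk k) * ((- u k) ^ n * delta (u k))"
      unfolding r cst_mult cst_power cst_neg cst_1 power_minus[of "u k"] by (simp only: ac_simps)
    finally show "delta ((\<lambda>(k, n). cst (cL k n) * u k ^ Suc n) p) = (\<lambda>(k, n). cst (mk k) * ((- u k) ^ n * delta (u k))) p"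
      unfolding p by (simp add: delta_cst_mult)
  qed
  also have "\<dots> = ssum (\<lambda>k. ssum (\<lambda>n. cst (mk k) * ((- u k) ^ n * delta (u k))))"
    using ssum_pair[of "\<lambda>k n. cst (mk k) * ((- u k) ^ n * delta (u k))"] lfP by simp
  also have "\<dots> = ssum (\<lambda>k. cst (mk k) * (ssum (\<lambda>n. (- u k) ^ n) * delta (u k)))"
    by (rule ssum_cong) (simp add: ssum_cst_mult ssum_mult_right[OF lfG])
  also have "\<dots> = ssum (\<lambda>k. cst (of_int (moebius (Suc k))) * Q k)"
  proof (rule ssum_cong)
    fix k
    have "mk k * of_nat (Suc k) = of_int (moebius (Suc k))" by (simp add: mk_def del: of_nat_Suc)
    then show "cst (mk k) * (ssum (\<lambda>n. (- u k) ^ n) * delta (u k)) = cst (of_int (moebius (Suc k))) * Q k"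
      unfolding geomk by (metis cst_mult cst_of_nat mult.assoc)
  qed
  also have "\<dots> = ssum (\<lambda>k. ssum (\<lambda>j. cst (of_int (moebius (Suc k))) * pc (Suc k * Suc j) (delta X)))"
    unfolding Q_def by (simp add: ssum_cst_mult)
  also have "\<dots> = ssum (\<lambda>(k, j). cst (of_int (moebius (Suc k))) * pc (Suc k * Suc j) (delta X))"
    using ssum_pair[of "\<lambda>k j. cst (of_int (moebius (Suc k))) * pc (Suc k * Suc j) (delta X)"] lfR by simp
  also have "\<dots> = ssum (\<lambda>p. V (g p))" by (simp only: Vg)
  also have "\<dots> = ssum V" by (rule ssum_reindex_inj[OF injg Vz, symmetric])
  also have "\<dots> = ssum (\<lambda>n. ssum (\<lambda>k. V (n, k)))"
    using ssum_pair[of "\<lambda>n k. V (n, k)"] lfV by simp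
  also have "\<dots> = ssum (\<lambda>n::nat. if n = 0 then delta X else 0)" by (simp only: Vrow)
  also have "\<dots> = delta X" by (rule ssum_single)
  finally have "delta (pleth (sf_susp Lie) C) = delta X" .
  moreover have "coeff (pleth (sf_susp Lie) C) {#} = coeff X {#}"
    using X[unfolded ordn_1] by (simp add: coeff_pleth_empty sf_susp_def Lie_def)
  ultimately show ?thesis unfolding C_def by (rule delta_eqI)
qed


lemma T_zero: assumes "lam \<notin> range (\<lambda>n. replicate_mset (Suc n) (0::nat))"
  shows "sf_p1_over_1_plus_p1 lam = 0"
proof (rule ccontr)
  assume "sf_p1_over_1_plus_p1 lam \<noteq> 0"
  then have ne: "lam \<noteq> {#}" and s: "set_mset lam = {0}"
    by (auto simp: sf_p1_over_1_plus_p1_def split: if_splits)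
  have "count lam 0 > 0" using s by auto
  then have c: "Suc (count lam 0 - 1) = count lam 0" by simp
  have "lam = replicate_mset (Suc (count lam 0 - 1)) 0" unfolding c by (rule set_single_replicate[OF s])
  then show False using assms by blast
qed

lemma T_rep: "sf_p1_over_1_plus_p1 (replicate_mset (Suc n) 0) = (-1) ^ n"
proof -
  have "set_mset (replicate_mset (Suc n) (0::nat)) = {0}" by simp
  then show ?thesis unfolding sf_p1_over_1_plus_p1_def by (simp del: replicate_mset_Suc)
qed

lemma pleth_T: assumes C: "ordn C 1" shows "(1 + C) * pleth sf_p1_over_1_plus_p1 C = C"
proof -
  have inj: "inj (\<lambda>n. replicate_mset (Suc n) (0::nat))"
  proof (rule injI)
    fix a b assume "replicate_mset (Suc a) (0::nat) = replicate_mset (Suc b) 0"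
    then have "size (replicate_mset (Suc a) (0::nat)) = size (replicate_mset (Suc b) (0::nat))" by simp
    then show "a = b" by simp
  qed
  have lfG: "lf (\<lambda>n. (- C) ^ n)"
    by (rule lf_ordI[of _ id]) (auto intro: ordn_power ordn_neg C)
  have z: "\<And>lam. lam \<notin> range (\<lambda>n. replicate_mset (Suc n) (0::nat)) \<Longrightarrow> cst (sf_p1_over_1_plus_p1 lam) * monom lam C = 0"
    using T_zero by simp
  have "pleth sf_p1_over_1_plus_p1 C = ssum (\<lambda>n. cst (sf_p1_over_1_plus_p1 (replicate_mset (Suc n) 0)) * monom (replicate_mset (Suc n) 0) C)"
    unfolding pleth_ssum[OF C] by (rule ssum_reindex_inj[OF inj z])
  also have "\<dots> = ssum (\<lambda>n. C * (- C) ^ n)"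
  proof (rule ssum_cong)
    fix n
    show "cst (sf_p1_over_1_plus_p1 (replicate_mset (Suc n) 0)) * monom (replicate_mset (Suc n) 0) C = C * (- C) ^ n"
      unfolding T_rep monom_replicate cst_power cst_neg cst_1 power_minus[of C] by simp
  qed
  also have "\<dots> = C * ssum (\<lambda>n. (- C) ^ n)" by (rule ssum_mult_left[OF lfG, symmetric])
  finally have "(1 + C) * pleth sf_p1_over_1_plus_p1 C = C * ((1 + C) * ssum (\<lambda>n. (- C) ^ n))"
    by (simp only: ac_simps)
  then show ?thesis unfolding geom[OF C] by simp
qed

definition agree :: "nat \<Rightarrow> ps \<Rightarrow> ps \<Rightarrow> bool" where
  "agree n f g \<longleftrightarrow> (\<forall>m. sf_wt m \<le> n \<longrightarrow> coeff f m = coeff g m)"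

lemma dec_wt: "p \<in> dec m \<Longrightarrow> sf_wt (fst p) \<le> sf_wt m \<and> sf_wt (snd p) \<le> sf_wt m"
  by (metis le_add1 le_add2 mem_dec sf_wt_add)

lemma agree_mult: assumes "agree n f f'" "agree n g g'" shows "agree n (f * g) (f' * g')"
  unfolding agree_def
proof (intro allI impI)
  fix m assume m: "sf_wt m \<le> n"
  show "coeff (f * g) m = coeff (f' * g') m" unfolding coeff_mult
  proof (rule sum.cong[OF refl])
    fix p assume "p \<in> dec m"
    then have "sf_wt (fst p) \<le> n" "sf_wt (snd p) \<le> n" using dec_wt m by (blast intro: le_trans)+
    then show "coeff f (fst p) * coeff g (snd p) = coeff f' (fst p) * coeff g' (snd p)"
      using assms by (simp add: agree_def)
  qed
qed

lemma agree_refl: "agree n f f" by (simp add: agree_def)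

lemma agree_pc: assumes "agree n f g" "k > 0" shows "agree n (pc k f) (pc k g)"
  unfolding agree_def
proof (intro allI impI)
  fix m assume m: "sf_wt m \<le> n"
  show "coeff (pc k f) m = coeff (pc k g) m"
  proof (cases "m \<in> range (Phi k)")
    case True
    then obtain a where a: "m = Phi k a" by auto
    have "sf_wt a \<le> sf_wt m" using a assms(2) by (simp add: wt_Phi)
    then show ?thesis using a assms m by (simp add: agree_def)
  qed (simp add: coeff_pc_nimg)
qed

lemma agree_monom: "agree n W W' \<Longrightarrow> agree n (monom lam W) (monom lam W')"
  by (induct lam) (simp_all add: agree_refl agree_mult agree_pc)

lemma agree_pleth: assumes "agree n W W'" shows "agree n (pleth g W) (pleth g W')"
  unfolding agree_def
proof (intro allI impI)
  fix m assume m: "sf_wt m \<le> n"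
  show "coeff (pleth g W) m = coeff (pleth g W') m"
    unfolding coeff_pleth using agree_monom[OF assms] m by (simp add: agree_def)
qed

lemma unique_fix:
  assumes X: "ordn X 1" and Y: "ordn Y 1"
    and hX: "X * (1 + pleth Comm X) = pp 1" and hY: "Y * (1 + pleth Comm Y) = pp 1"
  shows "X = Y"
proof -
  have X0: "coeff X {#} = 0" and Y0: "coeff Y {#} = 0" using X Y by (simp_all only: ordn_1)
  have eX: "X = pp 1 - X * pleth Comm X" using hX by (simp add: algebra_simps)
  have eY: "Y = pp 1 - Y * pleth Comm Y" using hY by (simp add: algebra_simps)
  have "agree n X Y" for n
  proof (induct n)
    case 0
    show ?case unfolding agree_def using X0 Y0 by simp
  next
    case (Suc n)
    have aC: "agree n (pleth Comm X) (pleth Comm Y)" by (rule agree_pleth[OF Suc])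
    show ?case unfolding agree_def
    proof (intro allI impI)
      fix m assume m: "sf_wt m \<le> Suc n"
      show "coeff X m = coeff Y m"
      proof (cases "sf_wt m \<le> n")
        case True then show ?thesis using Suc by (simp add: agree_def)
      next
        case False
        then have mw: "sf_wt m = Suc n" using m by simp
        have "coeff (X * pleth Comm X) m = coeff (Y * pleth Comm Y) m" unfolding coeff_mult
        proof (rule sum.cong[OF refl])
          fix p assume p: "p \<in> dec m"
          show "coeff X (fst p) * coeff (pleth Comm X) (snd p) = coeff Y (fst p) * coeff (pleth Comm Y) (snd p)"
          proof (cases "fst p = {#}")
            case True then show ?thesis using X0 Y0 by simp
          next
            case F1: False
            show ?thesis
            proof (cases "snd p = {#}")
              case True then show ?thesis by (simp add: coeff_Comm_empty)
            next
              case F2: False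
              have s: "sf_wt (fst p) + sf_wt (snd p) = Suc n" using p mw by (metis mem_dec sf_wt_add)
              have "sf_wt (fst p) \<noteq> 0" using F1 by simp
              moreover have "sf_wt (snd p) \<noteq> 0" using F2 by simp
              ultimately have "sf_wt (fst p) \<le> n" "sf_wt (snd p) \<le> n" using s by linarith+
              then show ?thesis using Suc aC by (simp add: agree_def)
            qed
          qed
        qed
        then show ?thesis by (subst eX, subst eY) simp
      qed
    qed
  qed
  then show ?thesis by (intro ps_eqI) (auto simp: agree_def)
qed


lemma Abs_coeff: "coeff (Abs_ps f) = f"
  by (simp add: coeff.rep_eq Abs_ps_inverse)

lemma abs_mult: "Abs_ps (sf_mult f g) = Abs_ps f * Abs_ps g"
  by (rule ps_eqI) (simp add: Abs_coeff coeff_mult sf_mult_dec)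
lemma abs_add: "Abs_ps (sf_add f g) = Abs_ps f + Abs_ps g"
  by (rule ps_eqI) (simp add: Abs_coeff sf_add_def)
lemma abs_sub: "Abs_ps (sf_sub f g) = Abs_ps f - Abs_ps g"
  by (rule ps_eqI) (simp add: Abs_coeff sf_sub_def)
lemma abs_one: "Abs_ps (sf_const 1) = 1"
  by (rule ps_eqI) (simp add: Abs_coeff sf_const_def coeff_1)
lemma abs_p: "Abs_ps (sf_p k) = pp k"
  by (rule ps_eqI) (simp add: Abs_coeff coeff_pp sf_p_def)
lemma abs_pleth: "Abs_ps (sf_pleth g f) = pleth g (Abs_ps f)"
  by (rule ps_eqI) (simp add: Abs_coeff pleth.rep_eq coeff.rep_eq Abs_ps_inverse)
lemma abs_negsusp: "Abs_ps (sf_neg (sf_susp M)) = tau (Abs_ps M)"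
  by (rule ps_eqI) (simp add: Abs_coeff coeff_tau sf_neg_def sf_susp_def)

lemma tau_pp1': "tau (pp (Suc 0)) = - pp (Suc 0)" using tau_pp1 by simp

lemma main_ps:
  fixes a b c hal P q mm :: ps
  assumes hpa: "a = pp 1 * pleth sf_p1_over_1_plus_p1 (pleth Comm (pp 1 - a))"
    and hp: "b = pp 1 * pleth (sf_susp Lie) (pleth Comm (pp 1 - a))"
    and ha: "c = pleth (sf_sub Comm (sf_p 1)) (pp 1 - a)"
    and h: "hal = b + c - a"
    and hP: "P = pp 1 * (1 + pleth Comm P)"
    and hQ: "q * (1 + pleth Comm P) = 1"
    and hM: "mm + 1 = pp 1 + pp 1 * P + q"
  shows "hal = tau mm"
proof -
  have p1: "ordn (pp 1) 1" by (rule ordn_pp) simp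
  define X where "X = pp 1 - a"
  define C where "C = pleth Comm X"
  have a1: "ordn a 1" by (subst hpa) (rule ordn_mult1[OF p1])
  have X1: "ordn X 1" unfolding X_def by (rule ordn_diff[OF p1 a1])
  have C1: "ordn C 1" unfolding ordn_1 C_def by (rule coeff_Comm_empty)
  have aX: "a = pp 1 * pleth sf_p1_over_1_plus_p1 C" using hpa unfolding C_def X_def .
  have XC: "X * (1 + C) = pp 1"
  proof -
    have "X * (1 + C) = pp 1 * (1 + C) - pp 1 * ((1 + C) * pleth sf_p1_over_1_plus_p1 C)"
      unfolding X_def aX by (simp add: algebra_simps)
    also have "\<dots> = pp 1" unfolding pleth_T[OF C1] by (simp add: algebra_simps)
    finally show ?thesis .
  qed
  have bX: "b = pp 1 * X" using hp Lie_Comm[OF X1] unfolding X_def by simp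
  have pX: "pleth (sf_p 1) X = X" by (rule pleth_p1[OF X1])
  have "c = pleth Comm X - pleth (sf_p 1) X" using ha unfolding pleth_sub X_def .
  then have cX: "c = C - X" unfolding pX C_def .
  have hal_eq: "hal = pp 1 * X + C - pp 1" unfolding h bX cX by (simp add: X_def algebra_simps)
  have P1: "ordn P 1" by (subst hP) (rule ordn_mult1[OF p1])
  define Z where "Z = tau P"
  have Z1: "ordn Z 1" unfolding Z_def by (rule ordn_tau[OF P1])
  have hZ: "Z = - pp 1 * (1 + pleth Comm Z)"
    unfolding Z_def by (subst hP) (simp add: tau_mult tau_pp1 tau_pp1' tau_pleth[OF P1])
  have Y1: "ordn (- Z) 1" by (rule ordn_neg[OF Z1])
  have inv: "(1 + pleth Comm Z) * (1 + pleth Comm (- Z)) = 1" by (rule exp_inverse[OF Z1])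
  have hY: "(- Z) * (1 + pleth Comm (- Z)) = pp 1"
  proof -
    have "(- Z) * (1 + pleth Comm (- Z)) = pp 1 * ((1 + pleth Comm Z) * (1 + pleth Comm (- Z)))"
      by (subst hZ) (simp add: algebra_simps)
    then show ?thesis unfolding inv by simp
  qed
  have XY: "X = - Z" by (rule unique_fix[OF X1 Y1 XC[unfolded C_def] hY])
  have tq: "tau q * (1 + pleth Comm Z) = 1"
    using arg_cong[OF hQ, of tau] by (simp add: tau_mult tau_pleth[OF P1] Z_def)
  have tq2: "tau q = 1 + C"
  proof -
    have "tau q = tau q * ((1 + pleth Comm Z) * (1 + pleth Comm (- Z)))" unfolding inv by simp
    also have "\<dots> = 1 + pleth Comm (- Z)" by (simp only: mult.assoc[symmetric] tq) simp
    finally show ?thesis unfolding C_def XY .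
  qed
  have "tau mm + 1 = - pp 1 + (- pp 1) * Z + tau q"
    using arg_cong[OF hM, of tau] by (simp add: tau_mult tau_pp1 tau_pp1' Z_def)
  then have "tau mm = pp 1 * X + C - pp 1" unfolding tq2 XY by (simp add: algebra_simps)
  then show ?thesis unfolding hal_eq by simp
qed

theorem mainTheorem5:
  fixes HALpa HALp HALa HAL PreLie Q M :: sf
  assumes hpa: "HALpa = sf_mult (sf_p 1)
      (sf_pleth sf_p1_over_1_plus_p1 (sf_pleth Comm (sf_sub (sf_p 1) HALpa)))"
    and hp: "HALp = sf_mult (sf_p 1)
      (sf_pleth (sf_susp Lie) (sf_pleth Comm (sf_sub (sf_p 1) HALpa)))"
    and ha: "HALa = sf_pleth (sf_sub Comm (sf_p 1)) (sf_sub (sf_p 1) HALpa)"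
    and h: "HAL = sf_sub (sf_add HALp HALa) HALpa"
    and hPreLie: "PreLie = sf_mult (sf_p 1) (sf_add (sf_const 1) (sf_pleth Comm PreLie))"
    and hQ: "sf_mult Q (sf_add (sf_const 1) (sf_pleth Comm PreLie)) = sf_const 1"
    and hM: "sf_add M (sf_const 1) = sf_add (sf_add (sf_p 1) (sf_mult (sf_p 1) PreLie)) Q"
  shows "HAL = sf_neg (sf_susp M)"
proof -
  note rw = abs_mult abs_add abs_sub abs_one abs_p abs_pleth
  have "Abs_ps HAL = tau (Abs_ps M)"
  proof (rule main_ps)
    show "Abs_ps HALpa = pp 1 * pleth sf_p1_over_1_plus_p1 (pleth Comm (pp 1 - Abs_ps HALpa))"
      using arg_cong[OF hpa, of Abs_ps] unfolding rw .
    show "Abs_ps HALp = pp 1 * pleth (sf_susp Lie) (pleth Comm (pp 1 - Abs_ps HALpa))"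
      using arg_cong[OF hp, of Abs_ps] unfolding rw .
    show "Abs_ps HALa = pleth (sf_sub Comm (sf_p 1)) (pp 1 - Abs_ps HALpa)"
      using arg_cong[OF ha, of Abs_ps] unfolding abs_pleth abs_sub abs_p .
    show "Abs_ps HAL = Abs_ps HALp + Abs_ps HALa - Abs_ps HALpa"
      using arg_cong[OF h, of Abs_ps] unfolding rw .
    show "Abs_ps PreLie = pp 1 * (1 + pleth Comm (Abs_ps PreLie))"
      using arg_cong[OF hPreLie, of Abs_ps] unfolding rw .
    show "Abs_ps Q * (1 + pleth Comm (Abs_ps PreLie)) = 1"
      using arg_cong[OF hQ, of Abs_ps] unfolding rw .
    show "Abs_ps M + 1 = pp 1 + pp 1 * Abs_ps PreLie + Abs_ps Q"
      using arg_cong[OF hM, of Abs_ps] unfolding rw .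
  qed
  then have "Abs_ps HAL = Abs_ps (sf_neg (sf_susp M))" unfolding abs_negsusp .
  then show ?thesis by (simp add: Abs_ps_inject)
qed


end
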